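(* Let $a<b$ be coprime positive integers and suppose the gap sequence of $U(a,b)$ is eventually periodic with computable witnesses, i.e. there is an algorithm that, given $(a,b)$, outputs a threshold $N$ and period $p\ge 1$ such that $g_{k+p}=g_k$ for all $k\ge N$. Let $\mathcal{U}_{a,b}=(\mathbb{N},+,0,1,\mathrm{Ulam}_{a,b})$ with $\mathrm{Ulam}_{a,b}$ interpreted as $U(a,b)$. Then: (i) the density $d(U(a,b))=\lim_{n\to\infty}|U(a,b)\cap[0,n]|/n$ is computable (as a rational number) from the witnesses; (ii) $\mathrm{Th}(\mathcal{U}_{a,b})$ is decidable; (iii) membership in any definable subset of $\mathbb{N}^k$ in $\mathcal{U}_{a,b}$ is decidable, uniformly in the defining formula.
   Context: For positive integers $a<b$, the Ulam sequence $U(a,b)$ is the increasing sequence $(u_k)_{k\ge 1}$ defined by $u_1=a$, $u_2=b$, and for $k\ge 3$, $u_k$ is the least integer $n>u_{k-1}$ for which there is exactly one pair of indices $1\le i<j<k$ with $n=u_i+u_j$; $U(a,b)$ also denotes the set $\{u_k\}$, and $g_k=u_{k+1}-u_k$. *)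

theory Defs
  imports Complex_Main "HOL-Library.Nat_Bijection"
begin

fun ulam_prefix :: "nat \<Rightarrow> nat \<Rightarrow> nat \<Rightarrow> nat list" where
  "ulam_prefix a b 0 = []"
| "ulam_prefix a b (Suc 0) = [a]"
| "ulam_prefix a b (Suc (Suc 0)) = [a, b]"
| "ulam_prefix a b (Suc (Suc (Suc k))) =
     (let us = ulam_prefix a b (Suc (Suc k)) in
      us @ [LEAST n. n > last us \<and>
              card {(i, j). i < j \<and> j < length us \<and> us ! i + us ! j = n} = 1])"

definition ulam :: "nat \<Rightarrow> nat \<Rightarrow> nat \<Rightarrow> nat" where
  "ulam a b k = ulam_prefix a b (Suc k) ! k"

definition ulam_set :: "nat \<Rightarrow> nat \<Rightarrow> nat set" where
  "ulam_set a b = range (ulam a b)"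

definition ulam_gap :: "nat \<Rightarrow> nat \<Rightarrow> nat \<Rightarrow> nat" where
  "ulam_gap a b k = ulam a b (Suc k) - ulam a b k"

definition periodic_witness :: "nat \<Rightarrow> nat \<Rightarrow> nat \<Rightarrow> nat \<Rightarrow> bool" where
  "periodic_witness a b N p \<longleftrightarrow>
     p \<ge> 1 \<and> (\<forall>k\<ge>N. ulam_gap a b (k + p) = ulam_gap a b k)"

datatype recf = Z | S | Proj nat | Cn recf "recf list" | Pr recf recf | Mn recf

inductive eval :: "recf \<Rightarrow> nat list \<Rightarrow> nat \<Rightarrow> bool" where
  eval_Z: "eval Z xs 0"
| eval_S: "eval S (x # xs) (Suc x)"
| eval_Proj: "i < length xs \<Longrightarrow> eval (Proj i) xs (xs ! i)"
| eval_Cn: "list_all2 (\<lambda>g y. eval g xs y) gs ys \<Longrightarrow> eval f ys z \<Longrightarrow> eval (Cn f gs) xs z"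
| eval_Pr0: "eval f xs y \<Longrightarrow> eval (Pr f g) (0 # xs) y"
| eval_PrS: "eval (Pr f g) (n # xs) y \<Longrightarrow> eval g (n # y # xs) z \<Longrightarrow> eval (Pr f g) (Suc n # xs) z"
| eval_Mn: "eval f (n # xs) 0 \<Longrightarrow> (\<forall>m<n. \<exists>y. eval f (m # xs) y \<and> y \<noteq> 0)
             \<Longrightarrow> eval (Mn f) xs n"
monos list_all2_mono

datatype tm = Var nat | Zer | One | Plus tm tm
datatype fm = Eq tm tm | Ulam tm | Neg fm | And fm fm | Ex nat fm

primrec tm_val :: "(nat \<Rightarrow> nat) \<Rightarrow> tm \<Rightarrow> nat" where
  "tm_val e (Var i) = e i"
| "tm_val e Zer = 0"
| "tm_val e One = 1"
| "tm_val e (Plus s t) = tm_val e s + tm_val e t"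

primrec sat :: "nat set \<Rightarrow> (nat \<Rightarrow> nat) \<Rightarrow> fm \<Rightarrow> bool" where
  "sat U e (Eq s t) = (tm_val e s = tm_val e t)"
| "sat U e (Ulam t) = (tm_val e t \<in> U)"
| "sat U e (Neg \<phi>) = (\<not> sat U e \<phi>)"
| "sat U e (And \<phi> \<psi>) = (sat U e \<phi> \<and> sat U e \<psi>)"
| "sat U e (Ex i \<phi>) = (\<exists>x. sat U (e(i := x)) \<phi>)"

primrec tm_vars :: "tm \<Rightarrow> nat set" where
  "tm_vars (Var i) = {i}"
| "tm_vars Zer = {}"
| "tm_vars One = {}"
| "tm_vars (Plus s t) = tm_vars s \<union> tm_vars t"

primrec fvars :: "fm \<Rightarrow> nat set" where
  "fvars (Eq s t) = tm_vars s \<union> tm_vars t"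
| "fvars (Ulam t) = tm_vars t"
| "fvars (Neg \<phi>) = fvars \<phi>"
| "fvars (And \<phi> \<psi>) = fvars \<phi> \<union> fvars \<psi>"
| "fvars (Ex i \<phi>) = fvars \<phi> - {i}"

primrec tm_code :: "tm \<Rightarrow> nat" where
  "tm_code (Var i) = prod_encode (0, i)"
| "tm_code Zer = prod_encode (1, 0)"
| "tm_code One = prod_encode (2, 0)"
| "tm_code (Plus s t) = prod_encode (3, prod_encode (tm_code s, tm_code t))"

primrec fm_code :: "fm \<Rightarrow> nat" where
  "fm_code (Eq s t) = prod_encode (0, prod_encode (tm_code s, tm_code t))"
| "fm_code (Ulam t) = prod_encode (1, tm_code t)"
| "fm_code (Neg \<phi>) = prod_encode (2, fm_code \<phi>)"
| "fm_code (And \<phi> \<psi>) = prod_encode (3, prod_encode (fm_code \<phi>, fm_code \<psi>))"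
| "fm_code (Ex i \<phi>) = prod_encode (4, prod_encode (i, fm_code \<phi>))"

definition tuple_env :: "nat list \<Rightarrow> nat \<Rightarrow> nat" where
  "tuple_env xs i = (if i < length xs then xs ! i else 0)"

end

theory Submission
  imports Defs
begin

definition rc :: "(nat \<Rightarrow> nat) \<Rightarrow> bool" where
  "rc g \<longleftrightarrow> (\<exists>r. \<forall>n. eval r [n] (g n))"
definition rc2 :: "(nat \<Rightarrow> nat \<Rightarrow> nat) \<Rightarrow> bool" where
  "rc2 h \<longleftrightarrow> (\<exists>r. \<forall>m n. eval r [m, n] (h m n))"
definition rc3 :: "(nat \<Rightarrow> nat \<Rightarrow> nat \<Rightarrow> nat) \<Rightarrow> bool" where
  "rc3 h \<longleftrightarrow> (\<exists>r. \<forall>m n k. eval r [m, n, k] (h m n k))"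

lemma ev_proj: "i < length xs \<Longrightarrow> y = xs ! i \<Longrightarrow> eval (Proj i) xs y"
  using eval_Proj by simp

lemma ev_cn1: "eval g xs y \<Longrightarrow> eval f [y] z \<Longrightarrow> eval (Cn f [g]) xs z"
  by (rule eval_Cn[of _ _ "[y]"]) auto
lemma ev_cn2: "eval g1 xs y1 \<Longrightarrow> eval g2 xs y2 \<Longrightarrow> eval f [y1, y2] z \<Longrightarrow> eval (Cn f [g1, g2]) xs z"
  by (rule eval_Cn[of _ _ "[y1, y2]"]) auto
lemma ev_cn3: "eval g1 xs y1 \<Longrightarrow> eval g2 xs y2 \<Longrightarrow> eval g3 xs y3 \<Longrightarrow> eval f [y1, y2, y3] z
   \<Longrightarrow> eval (Cn f [g1, g2, g3]) xs z"
  by (rule eval_Cn[of _ _ "[y1, y2, y3]"]) auto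

lemma rc_cong: "rc f \<Longrightarrow> (\<And>n. f n = g n) \<Longrightarrow> rc g"
  unfolding rc_def by metis
lemma rc2_cong: "rc2 f \<Longrightarrow> (\<And>m n. f m n = g m n) \<Longrightarrow> rc2 g"
  unfolding rc2_def by metis
lemma rc3_cong: "rc3 f \<Longrightarrow> (\<And>m n k. f m n k = g m n k) \<Longrightarrow> rc3 g"
  unfolding rc3_def by metis

lemma rc_id: "rc (\<lambda>n. n)"
  unfolding rc_def by (rule exI[of _ "Proj 0"]) (auto intro: ev_proj)

lemma rc_const: "rc (\<lambda>_. c)"
proof (induction c)
  case 0 then show ?case unfolding rc_def by (auto intro: eval_Z)
next
  case (Suc c)
  then obtain r where r: "\<And>n. eval r [n] c" unfolding rc_def by auto
  show ?case unfolding rc_def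
    by (rule exI[of _ "Cn S [r]"]) (auto intro: ev_cn1 r eval_S)
qed

lemma rc_comp: "rc h \<Longrightarrow> rc f \<Longrightarrow> rc (\<lambda>n. h (f n))"
proof -
  assume "rc h" "rc f"
  then obtain rh rf where "\<And>n. eval rh [n] (h n)" "\<And>n. eval rf [n] (f n)" unfolding rc_def by metis
  then show ?thesis unfolding rc_def by (intro exI[of _ "Cn rh [rf]"]) (blast intro: ev_cn1)
qed
lemma rc_comp2: "rc2 h \<Longrightarrow> rc f \<Longrightarrow> rc g \<Longrightarrow> rc (\<lambda>n. h (f n) (g n))"
proof -
  assume "rc2 h" "rc f" "rc g"
  then obtain rh rf rg where "\<And>m n. eval rh [m, n] (h m n)" "\<And>n. eval rf [n] (f n)" "\<And>n. eval rg [n] (g n)"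
    unfolding rc_def rc2_def by metis
  then show ?thesis unfolding rc_def by (intro exI[of _ "Cn rh [rf, rg]"]) (blast intro: ev_cn2)
qed
lemma rc_comp3: "rc3 h \<Longrightarrow> rc f \<Longrightarrow> rc g \<Longrightarrow> rc k \<Longrightarrow> rc (\<lambda>n. h (f n) (g n) (k n))"
proof -
  assume "rc3 h" "rc f" "rc g" "rc k"
  then obtain rh rf rg rk where "\<And>m n k. eval rh [m, n, k] (h m n k)" "\<And>n. eval rf [n] (f n)"
    "\<And>n. eval rg [n] (g n)" "\<And>n. eval rk [n] (k n)"
    unfolding rc_def rc3_def by metis
  then show ?thesis unfolding rc_def by (intro exI[of _ "Cn rh [rf, rg, rk]"]) (blast intro: ev_cn3)
qed
lemma rc2_comp2: "rc2 h \<Longrightarrow> rc2 f \<Longrightarrow> rc2 g \<Longrightarrow> rc2 (\<lambda>m n. h (f m n) (g m n))"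
proof -
  assume "rc2 h" "rc2 f" "rc2 g"
  then obtain rh rf rg where "\<And>m n. eval rh [m, n] (h m n)" "\<And>m n. eval rf [m, n] (f m n)" "\<And>m n. eval rg [m, n] (g m n)"
    unfolding rc2_def by metis
  then show ?thesis unfolding rc2_def by (intro exI[of _ "Cn rh [rf, rg]"]) (blast intro: ev_cn2)
qed
lemma rc2_comp1: "rc h \<Longrightarrow> rc2 f \<Longrightarrow> rc2 (\<lambda>m n. h (f m n))"
proof -
  assume "rc h" "rc2 f"
  then obtain rh rf where "\<And>n. eval rh [n] (h n)" "\<And>m n. eval rf [m, n] (f m n)" unfolding rc_def rc2_def by metis
  then show ?thesis unfolding rc2_def by (intro exI[of _ "Cn rh [rf]"]) (blast intro: ev_cn1)
qed
lemma rc2_p1: "rc2 (\<lambda>m n. m)"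
  unfolding rc2_def by (rule exI[of _ "Proj 0"]) (auto intro: ev_proj)
lemma rc2_p2: "rc2 (\<lambda>m n. n)"
  unfolding rc2_def by (rule exI[of _ "Proj 1"]) (auto intro: ev_proj)
lemma rc2_const: "rc2 (\<lambda>m n. c)"
proof -
  obtain r where "\<And>n. eval r [n] c" using rc_const[of c] unfolding rc_def by auto
  then show ?thesis unfolding rc2_def
    by (intro exI[of _ "Cn r [Proj 0]"]) (auto intro!: ev_cn1 ev_proj)
qed

lemma rc_pr:
  assumes "rc f0" "rc3 g"
  shows "rc2 (\<lambda>m n. rec_nat (f0 n) (\<lambda>k y. g k y n) m)"
proof -
  obtain rf where rf: "\<And>n. eval rf [n] (f0 n)" using assms(1) unfolding rc_def by auto
  obtain rg where rg: "\<And>m n k. eval rg [m, n, k] (g m n k)" using assms(2) unfolding rc3_def by auto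
  have "eval (Pr rf rg) [m, n] (rec_nat (f0 n) (\<lambda>k y. g k y n) m)" for m n
  proof (induction m)
    case 0 then show ?case using eval_Pr0[OF rf] by simp
  next
    case (Suc m) then show ?case using eval_PrS[OF Suc rg] by simp
  qed
  then show ?thesis unfolding rc2_def by blast
qed

lemma rc3_S2: "rc3 (\<lambda>k y n. Suc y)"
  unfolding rc3_def by (rule exI[of _ "Cn S [Proj 1]"]) (auto intro!: ev_cn1 ev_proj eval_S)

lemma rc2_add: "rc2 (\<lambda>m n. m + n)"
proof -
  have a: "rc2 (\<lambda>m n. rec_nat n (\<lambda>k y. Suc y) m)" using rc_pr[OF rc_id rc3_S2] by simp
  have b: "rec_nat n (\<lambda>k y. Suc y) m = m + n" for m n by (induction m) auto
  show ?thesis by (rule rc2_cong[OF a b])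
qed

lemma rc_pred: "rc (\<lambda>n. n - 1)"
proof -
  have "eval (Pr Z (Proj 0)) [n] (n - 1)" for n
  proof (cases n)
    case 0 then show ?thesis using eval_Pr0[OF eval_Z[of "[]"]] by simp
  next
    case (Suc k)
    have "\<exists>y. eval (Pr Z (Proj 0)) [k] y"
    proof (induction k)
      case 0 then show ?case using eval_Pr0[OF eval_Z[of "[]"]] by auto
    next
      case (Suc k) then obtain y where "eval (Pr Z (Proj 0)) [k] y" by auto
      then show ?case using eval_PrS[of Z "Proj 0" k "[]" y k] ev_proj[of 0 "[k, y]" k] by auto
    qed
    then obtain y where "eval (Pr Z (Proj 0)) [k] y" by auto
    then show ?thesis using eval_PrS[of Z "Proj 0" k "[]" y k] ev_proj[of 0 "[k, y]" k] Suc by auto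
  qed
  then show ?thesis unfolding rc_def by blast
qed

lemma rc3_from_rc_2: "rc f \<Longrightarrow> rc3 (\<lambda>k y n. f y)"
proof -
  assume "rc f" then obtain r where r: "\<And>n. eval r [n] (f n)" unfolding rc_def by auto
  show ?thesis unfolding rc3_def
    by (rule exI[of _ "Cn r [Proj 1]"]) (auto intro!: ev_cn1 ev_proj r)
qed

lemma rc2_monus: "rc2 (\<lambda>m n. m - n)"
proof -
  have a: "rc2 (\<lambda>m n. rec_nat n (\<lambda>k y. y - 1) m)" using rc_pr[OF rc_id rc3_from_rc_2[OF rc_pred]] by simp
  have b: "rec_nat n (\<lambda>k y. y - 1) m = n - m" for m n by (induction m) auto
  have c: "rc2 (\<lambda>m n. n - m)" by (rule rc2_cong[OF a b])
  show ?thesis by (rule rc2_cong[OF rc2_comp2[OF c rc2_p2 rc2_p1]]) simp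
qed

lemma rc3_add13: "rc3 (\<lambda>k y n. y + n)"
proof -
  obtain r where r: "\<And>m n. eval r [m, n] (m + n)" using rc2_add unfolding rc2_def by auto
  then have r': "\<And>m n z. z = m + n \<Longrightarrow> eval r [m, n] z" by simp
  show ?thesis unfolding rc3_def
    by (rule exI[of _ "Cn r [Proj 1, Proj 2]"]) (auto intro!: ev_cn2 ev_proj r')
qed

lemma rc2_mult: "rc2 (\<lambda>m n. m * n)"
proof -
  have a: "rc2 (\<lambda>m n. rec_nat 0 (\<lambda>k y. y + n) m)" using rc_pr[OF rc_const rc3_add13] by simp
  have b: "rec_nat 0 (\<lambda>k y. y + n) m = m * n" for m n by (induction m) auto
  show ?thesis by (rule rc2_cong[OF a b])
qed

lemma rc3_tri: "rc3 (\<lambda>k y n. y + Suc k)"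
proof -
  obtain r where r: "\<And>m n. eval r [m, n] (m + n)" using rc2_add unfolding rc2_def by auto
  then have r': "\<And>m n z. z = m + n \<Longrightarrow> eval r [m, n] z" by simp
  show ?thesis unfolding rc3_def
    by (rule exI[of _ "Cn r [Proj 1, Cn S [Proj 0]]"]) (auto intro!: ev_cn2 ev_cn1 ev_proj r' eval_S)
qed

lemma rc_triangle: "rc triangle"
proof -
  have a: "rc2 (\<lambda>m n. rec_nat 0 (\<lambda>k y. y + Suc k) m)" using rc_pr[OF rc_const rc3_tri] by simp
  have b: "rec_nat 0 (\<lambda>k y. y + Suc k) m = triangle m" for m n by (induction m) auto
  have c: "rc2 (\<lambda>m n. triangle m)" by (rule rc2_cong[OF a b])
  show ?thesis by (rule rc_cong[OF rc_comp2[OF c rc_id rc_id]]) simp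
qed

lemma rc2_pe: "rc2 (\<lambda>m n. prod_encode (m, n))"
proof -
  have "rc2 (\<lambda>m n. triangle (m + n) + m)"
    by (rule rc2_comp2[OF rc2_add rc2_comp1[OF rc_triangle rc2_add] rc2_p1])
  then show ?thesis by (rule rc2_cong) (simp add: prod_encode_def)
qed

lemma rc_mn:
  assumes "rc2 f" "\<And>n. \<exists>m. f m n = 0"
  shows "rc (\<lambda>n. LEAST m. f m n = 0)"
proof -
  obtain r where r: "\<And>m n. eval r [m, n] (f m n)" using assms(1) unfolding rc2_def by auto
  have "eval (Mn r) [n] (LEAST m. f m n = 0)" for n
  proof (rule eval_Mn)
    show "eval r [LEAST m. f m n = 0, n] 0" using r[of "LEAST m. f m n = 0" n] LeastI_ex[OF assms(2)[of n]] by simp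
    show "\<forall>m<(LEAST m. f m n = 0). \<exists>y. eval r [m, n] y \<and> y \<noteq> 0"
      using r not_less_Least by blast
  qed
  then show ?thesis unfolding rc_def by blast
qed

definition pd_s :: "nat \<Rightarrow> nat" where "pd_s n = (LEAST s. Suc n - triangle (Suc s) = 0)"

lemma triangle_ge: "n \<le> triangle n"
  by (induction n) auto

lemma pd_s_props: "triangle (pd_s n) \<le> n \<and> n < triangle (Suc (pd_s n))"
proof -
  have ex: "\<exists>s. Suc n - triangle (Suc s) = 0" using triangle_ge[of "Suc n"] by (intro exI[of _ n]) auto
  have 1: "n < triangle (Suc (pd_s n))" using LeastI_ex[OF ex] unfolding pd_s_def by simp
  have 2: "triangle (pd_s n) \<le> n"
  proof (cases "pd_s n")
    case 0 then show ?thesis by simp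
  next
    case (Suc s)
    then have "s < pd_s n" by simp
    then have "\<not> (Suc n - triangle (Suc s) = 0)" unfolding pd_s_def by (rule not_less_Least)
    then show ?thesis using Suc by simp
  qed
  from 1 2 show ?thesis by simp
qed

lemma prod_decode_pd: "prod_decode n = (n - triangle (pd_s n), pd_s n - (n - triangle (pd_s n)))"
proof -
  define s where "s = pd_s n"
  define m where "m = n - triangle s"
  have p: "triangle s \<le> n" "n < triangle s + Suc s" using pd_s_props[of n] unfolding s_def by auto
  then have "m \<le> s" unfolding m_def by simp
  have "n = triangle s + m" using p unfolding m_def by simp
  then have "prod_decode n = prod_decode_aux s m" by (simp add: prod_decode_triangle_add)
  also have "\<dots> = (m, s - m)" using \<open>m \<le> s\<close> by (simp add: prod_decode_aux.simps)
  finally show ?thesis unfolding m_def s_def .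
qed

lemma rc_S: "rc Suc"
  unfolding rc_def by (rule exI[of _ S]) (auto intro: eval_S)

lemma rc_pd_s: "rc pd_s"
proof -
  have a: "rc2 (\<lambda>s n. Suc n - triangle (Suc s))"
    by (rule rc2_comp2[OF rc2_monus rc2_comp1[OF rc_S rc2_p2] rc2_comp1[OF rc_comp[OF rc_triangle rc_S] rc2_p1]])
  have ex: "\<And>n. \<exists>s. Suc n - triangle (Suc s) = 0" using triangle_ge
    by (metis diff_is_0_eq)
  show ?thesis by (rule rc_cong[OF rc_mn[OF a ex]]) (simp add: pd_s_def)
qed

lemma rc_pd1: "rc (\<lambda>n. fst (prod_decode n))"
proof -
  have "rc (\<lambda>n. n - triangle (pd_s n))"
    by (rule rc_comp2[OF rc2_monus rc_id rc_comp[OF rc_triangle rc_pd_s]])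
  then show ?thesis by (rule rc_cong) (simp add: prod_decode_pd)
qed

lemma rc_pd2: "rc (\<lambda>n. snd (prod_decode n))"
proof -
  have "rc (\<lambda>n. pd_s n - (n - triangle (pd_s n)))"
    by (rule rc_comp2[OF rc2_monus rc_pd_s rc_comp2[OF rc2_monus rc_id rc_comp[OF rc_triangle rc_pd_s]]])
  then show ?thesis by (rule rc_cong) (simp add: prod_decode_pd)
qed

lemma rc_if: "rc b \<Longrightarrow> rc f \<Longrightarrow> rc g \<Longrightarrow> rc (\<lambda>n. if b n = 0 then g n else f n)"
proof -
  assume "rc b" "rc f" "rc g"
  then obtain rb rf rg where r: "\<And>n. eval rb [n] (b n)" "\<And>n. eval rf [n] (f n)" "\<And>n. eval rg [n] (g n)"
    unfolding rc_def by metis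
  have p: "eval (Pr (Proj 1) (Proj 2)) [k, x, y] (if k = 0 then y else x)" for k x y
  proof (induction k)
    case 0 then show ?case using eval_Pr0[OF ev_proj[of 1 "[x, y]" y]] by simp
  next
    case (Suc k)
    then show ?case using eval_PrS[OF Suc ev_proj[of 2 "[k, _, x, y]" x]] by simp
  qed
  show ?thesis unfolding rc_def
    by (rule exI[of _ "Cn (Pr (Proj 1) (Proj 2)) [rb, rf, rg]"], intro allI ev_cn3[OF r(1) r(2) r(3)] p)
qed

lemma rc_iter:
  assumes "rc2 st"
  shows "rc3 (\<lambda>n s e. (st e ^^ n) s)"
proof -
  obtain r where r: "\<And>m n. eval r [m, n] (st m n)" using assms unfolding rc2_def by auto
  have "eval (Pr (Proj 0) (Cn r [Proj 3, Proj 1])) [n, s, e] ((st e ^^ n) s)" for n s e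
  proof (induction n)
    case 0 then show ?case using eval_Pr0[OF ev_proj[of 0 "[s, e]" s]] by simp
  next
    case (Suc n)
    show ?case
      by (rule eval_PrS[OF Suc]) (auto intro!: ev_cn2 ev_proj r[of e, simplified])
  qed
  then show ?thesis unfolding rc3_def by blast
qed


class encode = fixes enc :: "'a \<Rightarrow> nat"

instantiation nat :: encode begin
definition enc_nat_def: "enc n = (n::nat)"
instance ..
end
instantiation bool :: encode begin
definition enc_bool_def: "enc b = (if b then 1 else (0::nat))"
instance ..
end
instantiation int :: encode begin
definition enc_int_def: "enc (i::int) = prod_encode (nat i, nat (- i))"
instance ..
end
instantiation prod :: (encode, encode) encode begin
definition enc_prod_def: "enc p = prod_encode (enc (fst p), enc (snd p))"
instance ..
end
instantiation list :: (encode) encode begin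
definition enc_list_def: "enc xs = list_encode (map enc xs)"
instance ..
end

lemma enc_pair[simp]: "enc (a, b) = prod_encode (enc a, enc b)" by (simp add: enc_prod_def)
lemma enc_nat[simp]: "enc (n::nat) = n" by (simp add: enc_nat_def)
lemma enc_Nil[simp]: "enc [] = 0" by (simp add: enc_list_def)
lemma enc_Cons[simp]: "enc (a # l) = Suc (prod_encode (enc a, enc l))" by (simp add: enc_list_def)
lemma enc_True[simp]: "enc True = 1" and enc_False[simp]: "enc False = 0" by (simp_all add: enc_bool_def)

definition cp :: "('a::encode \<Rightarrow> 'b::encode) \<Rightarrow> bool" where
  "cp f \<longleftrightarrow> (\<exists>g. rc g \<and> (\<forall>x. g (enc x) = enc (f x)))"

lemma cpI: "rc g \<Longrightarrow> (\<And>x. g (enc x) = enc (f x)) \<Longrightarrow> cp f"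
  unfolding cp_def by blast
lemma cpE: "cp f \<Longrightarrow> (\<And>g. rc g \<Longrightarrow> (\<And>x. g (enc x) = enc (f x)) \<Longrightarrow> P) \<Longrightarrow> P"
  unfolding cp_def by blast
lemma cp_cong: "cp f \<Longrightarrow> (\<And>x. f x = g x) \<Longrightarrow> cp g"
  unfolding cp_def by metis

lemma cp_id: "cp (\<lambda>x. x)" by (rule cpI[OF rc_id]) simp
lemma cp_const: "cp (\<lambda>x. c)" by (rule cpI[OF rc_const]) simp

lemma cp_comp: "cp f \<Longrightarrow> cp g \<Longrightarrow> cp (\<lambda>x. f (g x))"
  apply (erule cpE, erule cpE)
  subgoal for gf gg by (rule cpI[OF rc_comp[of gf gg]]) auto
  done

lemma cp_pair: "cp f \<Longrightarrow> cp g \<Longrightarrow> cp (\<lambda>x. (f x, g x))"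
  apply (erule cpE, erule cpE)
  subgoal for gf gg by (rule cpI[OF rc_comp2[OF rc2_pe, of gf gg]]) auto
  done

lemma cp_fst: "cp f \<Longrightarrow> cp (\<lambda>x. fst (f x))"
  apply (erule cpE)
  subgoal for gf by (rule cpI[OF rc_comp[OF rc_pd1, of gf]]) (auto simp: enc_prod_def[of "f _"])
  done

lemma cp_snd: "cp f \<Longrightarrow> cp (\<lambda>x. snd (f x))"
  apply (erule cpE)
  subgoal for gf by (rule cpI[OF rc_comp[OF rc_pd2, of gf]]) (auto simp: enc_prod_def[of "f _"])
  done

lemma cp_nat2: "rc2 h \<Longrightarrow> cp (f :: 'a::encode \<Rightarrow> nat) \<Longrightarrow> cp g \<Longrightarrow> cp (\<lambda>x. h (f x) (g x))"
  apply (erule cpE, erule cpE)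
  subgoal for gf gg by (rule cpI[OF rc_comp2[of h gf gg]]) auto
  done

lemma cp_nat1: "rc h \<Longrightarrow> cp (f :: 'a::encode \<Rightarrow> nat) \<Longrightarrow> cp (\<lambda>x. h (f x))"
  apply (erule cpE)
  subgoal for gf by (rule cpI[OF rc_comp[of h gf]]) auto
  done

lemma cp_enc: "cp f \<Longrightarrow> cp (\<lambda>x. enc (f x))"
  by (erule cpE, rule cpI) auto

lemma cp_add: "cp f \<Longrightarrow> cp g \<Longrightarrow> cp (\<lambda>x. f x + g x :: nat)"
  by (rule cp_nat2[OF rc2_add])
lemma cp_sub: "cp f \<Longrightarrow> cp g \<Longrightarrow> cp (\<lambda>x. f x - g x :: nat)"
  by (rule cp_nat2[OF rc2_monus])
lemma cp_mult: "cp f \<Longrightarrow> cp g \<Longrightarrow> cp (\<lambda>x. f x * g x :: nat)"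
  by (rule cp_nat2[OF rc2_mult])
lemma cp_Suc: "cp f \<Longrightarrow> cp (\<lambda>x. Suc (f x))"
  by (rule cp_nat1[OF rc_S])

lemma cp_if: "cp b \<Longrightarrow> cp f \<Longrightarrow> cp g \<Longrightarrow> cp (\<lambda>x. if b x then f x else g x)"
  apply (erule cpE, erule cpE, erule cpE)
  subgoal for gb gf gg
    by (rule cpI[OF rc_if[of gb gf gg]]) auto
  done

lemma rc2_eqt: "rc2 (\<lambda>a b. if a = b then 1 else 0)"
proof -
  have "rc2 (\<lambda>a b. 1 - ((a - b) + (b - a)))"
    by (rule rc2_comp2[OF rc2_monus rc2_const rc2_comp2[OF rc2_add rc2_monus rc2_comp2[OF rc2_monus rc2_p2 rc2_p1]]])
  then show ?thesis by (rule rc2_cong) auto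
qed

lemma rc2_lesst: "rc2 (\<lambda>a b. if a < b then 1 else 0)"
proof -
  have "rc2 (\<lambda>a b. 1 - (1 - (b - a)))"
    by (rule rc2_comp2[OF rc2_monus rc2_const rc2_comp2[OF rc2_monus rc2_const rc2_comp2[OF rc2_monus rc2_p2 rc2_p1]]])
  then show ?thesis by (rule rc2_cong) auto
qed

lemma cp_eq_nat: "cp f \<Longrightarrow> cp g \<Longrightarrow> cp (\<lambda>x. (f x :: nat) = g x)"
  apply (erule cpE, erule cpE)
  subgoal for gf gg by (rule cpI[OF rc_comp2[OF rc2_eqt, of gf gg]]) (auto simp: enc_bool_def)
  done

lemma cp_less_nat: "cp f \<Longrightarrow> cp g \<Longrightarrow> cp (\<lambda>x. (f x :: nat) < g x)"
  apply (erule cpE, erule cpE)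
  subgoal for gf gg by (rule cpI[OF rc_comp2[OF rc2_lesst, of gf gg]]) (auto simp: enc_bool_def)
  done

lemma cp_True: "cp (\<lambda>x. True)" and cp_False: "cp (\<lambda>x. False)" by (rule cp_const)+

lemma cp_not: "cp b \<Longrightarrow> cp (\<lambda>x. \<not> b x)"
  by (rule cp_cong[OF cp_if[of b "\<lambda>x. False" "\<lambda>x. True", OF _ cp_const cp_const]]) auto
lemma cp_conj: "cp b \<Longrightarrow> cp c \<Longrightarrow> cp (\<lambda>x. b x \<and> c x)"
  by (rule cp_cong[OF cp_if[of b c "\<lambda>x. False", OF _ _ cp_const]]) auto
lemma cp_disj: "cp b \<Longrightarrow> cp c \<Longrightarrow> cp (\<lambda>x. b x \<or> c x)"
  by (rule cp_cong[OF cp_if[of b "\<lambda>x. True" c, OF _ cp_const]]) auto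
lemma cp_imp: "cp b \<Longrightarrow> cp c \<Longrightarrow> cp (\<lambda>x. b x \<longrightarrow> c x)"
  by (rule cp_cong[OF cp_if[of b c "\<lambda>x. True", OF _ _ cp_const]]) auto
lemma cp_eq_bool: "cp b \<Longrightarrow> cp c \<Longrightarrow> cp (\<lambda>x. (b x :: bool) = c x)"
  by (rule cp_cong[OF cp_if[of b c "\<lambda>x. \<not> c x", OF _ _ cp_not]]) auto

lemma cp_le_nat: "cp f \<Longrightarrow> cp g \<Longrightarrow> cp (\<lambda>x. (f x :: nat) \<le> g x)"
  by (rule cp_cong[OF cp_not[OF cp_less_nat[of g f]]]) auto

lemma cp_let: "cp f \<Longrightarrow> cp (\<lambda>p. g (fst p) (snd p)) \<Longrightarrow> cp (\<lambda>x. let y = f x in g x y)"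
  by (rule cp_cong[OF cp_comp[OF _ cp_pair[OF cp_id]]]) (auto simp: Let_def)

lemma cp_case_prod: "cp f \<Longrightarrow> cp (\<lambda>p. g (fst p) (fst (snd p)) (snd (snd p))) \<Longrightarrow>
   cp (\<lambda>x. case f x of (a, b) \<Rightarrow> g x a b)"
  by (rule cp_cong[OF cp_comp[OF _ cp_pair[OF cp_id]]]) (auto split: prod.split)

lemma cp_iter:
  fixes st :: "'a::encode \<Rightarrow> 's::encode \<Rightarrow> 's"
  assumes st: "cp (\<lambda>p. st (fst p) (snd p))" and n: "cp n" and s: "cp s"
  shows "cp (\<lambda>x. (st x ^^ n x) (s x))"
proof -
  obtain G where G: "rc G" "\<And>x y. G (prod_encode (enc x, enc y)) = enc (st x y)"
    using st by (rule cpE) (metis enc_pair fst_conv snd_conv)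
  obtain gn where gn: "rc gn" "\<And>x. gn (enc x) = enc (n x)" using n unfolding cp_def by blast
  obtain gs where gs: "rc gs" "\<And>x. gs (enc x) = enc (s x)" using s unfolding cp_def by blast
  define st' where "st' c y = G (prod_encode (c, y))" for c y
  have r2: "rc2 st'" unfolding st'_def by (rule rc2_comp1[OF G(1) rc2_pe])
  have it: "((st' (enc x)) ^^ k) (enc y) = enc ((st x ^^ k) y)" for x y k
  proof (induction k)
    case 0 show ?case by (simp only: funpow_0)
  next
    case (Suc k) then show ?case by (simp add: st'_def G(2))
  qed
  show ?thesis
    by (rule cpI[OF rc_comp3[OF rc_iter[OF r2] gn(1) gs(1) rc_id]]) (simp add: gn gs it)
qed

lemma cp_least:
  fixes t :: "'a::encode \<Rightarrow> nat \<Rightarrow> bool"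
  assumes t: "cp (\<lambda>p. t (fst p) (snd p))" and B: "cp B"
  shows "cp (\<lambda>x. LEAST n. t x n \<or> B x \<le> n)"
proof -
  obtain T where T: "rc T" "\<And>x y. T (prod_encode (enc x, enc y)) = enc (t x y)"
    using t by (rule cpE) (metis enc_pair fst_conv snd_conv)
  obtain gB where gB: "rc gB" "\<And>x. gB (enc x) = enc (B x)" using B unfolding cp_def by blast
  define F where "F m c = (1 - T (prod_encode (c, m))) * (gB c - m)" for m c
  have r2: "rc2 F" unfolding F_def
    by (rule rc2_comp2[OF rc2_mult rc2_comp2[OF rc2_monus rc2_const rc2_comp1[OF T(1) rc2_comp2[OF rc2_pe rc2_p2 rc2_p1]]]
          rc2_comp2[OF rc2_monus rc2_comp1[OF gB(1) rc2_p2] rc2_p1]])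
  have ex: "\<exists>m. F m c = 0" for c by (rule exI[of _ "gB c"]) (simp add: F_def)
  have eq: "F m (enc x) = 0 \<longleftrightarrow> t x m \<or> B x \<le> m" for m x
    using T(2)[of x m] gB(2)[of x] by (auto simp: F_def enc_bool_def)
  show ?thesis by (rule cpI[OF rc_mn[OF r2 ex]]) (simp add: eq)
qed


named_theorems cp_intros

declare cp_id[cp_intros] cp_const[cp_intros] cp_pair[cp_intros] cp_fst[cp_intros] cp_snd[cp_intros]
  cp_add[cp_intros] cp_sub[cp_intros] cp_mult[cp_intros] cp_Suc[cp_intros] cp_if[cp_intros]
  cp_eq_nat[cp_intros] cp_less_nat[cp_intros] cp_le_nat[cp_intros] cp_not[cp_intros]
  cp_conj[cp_intros] cp_disj[cp_intros] cp_imp[cp_intros] cp_eq_bool[cp_intros] cp_let[cp_intros]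
  cp_case_prod[cp_intros] cp_iter[cp_intros] cp_least[cp_intros] cp_enc[cp_intros]

lemma cp_app1: "cp F \<Longrightarrow> cp f \<Longrightarrow> cp (\<lambda>x. F (f x))"
  by (rule cp_comp)
lemma cp_app2: "cp (\<lambda>p. F (fst p) (snd p)) \<Longrightarrow> cp f \<Longrightarrow> cp g \<Longrightarrow> cp (\<lambda>x. F (f x) (g x))"
proof -
  assume H: "cp (\<lambda>p. F (fst p) (snd p))" and f: "cp f" and g: "cp g"
  show ?thesis by (rule cp_cong[OF cp_comp[OF H cp_pair[OF f g]]]) simp
qed
lemma cp_app3: "cp (\<lambda>p. F (fst p) (fst (snd p)) (snd (snd p))) \<Longrightarrow> cp f \<Longrightarrow> cp g \<Longrightarrow> cp h
   \<Longrightarrow> cp (\<lambda>x. F (f x) (g x) (h x))"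
proof -
  assume H: "cp (\<lambda>p. F (fst p) (fst (snd p)) (snd (snd p)))" and f: "cp f" and g: "cp g" and h: "cp h"
  show ?thesis by (rule cp_cong[OF cp_comp[OF H cp_pair[OF f cp_pair[OF g h]]]]) simp
qed

lemma cp_Cons[cp_intros]: "cp f \<Longrightarrow> cp g \<Longrightarrow> cp (\<lambda>x. f x # g x)"
  apply (erule cpE, erule cpE)
  subgoal for gf gg by (rule cpI[OF rc_comp[OF rc_S rc_comp2[OF rc2_pe, of gf gg]]]) auto
  done

lemma cp_case_list[cp_intros]:
  assumes l: "cp l" and nl: "cp nl" and c: "cp (\<lambda>p. c (fst p) (fst (snd p)) (snd (snd p)))"
  shows "cp (\<lambda>x. case l x of [] \<Rightarrow> nl x | a # t \<Rightarrow> c x a t)"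
proof -
  obtain gl where gl: "rc gl" "\<And>x. gl (enc x) = enc (l x)" using l unfolding cp_def by blast
  obtain gn where gn: "rc gn" "\<And>x. gn (enc x) = enc (nl x)" using nl unfolding cp_def by blast
  obtain gc where gc: "rc gc" "\<And>x a t. gc (prod_encode (enc x, prod_encode (enc a, enc t))) = enc (c x a t)"
    using c unfolding cp_def by (metis enc_pair fst_conv snd_conv)
  have r: "rc (\<lambda>n. gc (prod_encode (n, gl n - 1)))"
    by (rule rc_comp[OF gc(1) rc_comp2[OF rc2_pe rc_id rc_comp2[OF rc2_monus gl(1) rc_const]]])
  show ?thesis
  proof (rule cpI[OF rc_if[OF gl(1) r gn(1)]])
    fix x show "(if gl (enc x) = 0 then gn (enc x) else gc (prod_encode (enc x, gl (enc x) - 1))) =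
         enc (case l x of [] \<Rightarrow> nl x | a # t \<Rightarrow> c x a t)"
      by (cases "l x") (simp_all add: gl gn gc)
  qed
qed

lemma enc_list_len: "length xs \<le> enc xs"
proof (induction xs)
  case (Cons a xs)
  have "enc xs \<le> prod_encode (enc a, enc xs)" by (rule le_prod_encode_2)
  then show ?case using Cons.IH by simp
qed simp

lemma cp_foldl[cp_intros]:
  fixes h :: "'a::encode \<Rightarrow> 'b::encode \<Rightarrow> 'c::encode \<Rightarrow> 'b"
  assumes h: "cp (\<lambda>p. h (fst p) (fst (snd p)) (snd (snd p)))" and z: "cp z" and l: "cp l"
  shows "cp (\<lambda>x. foldl (h x) (z x) (l x))"
proof -
  define stp where "stp x p = (case fst p of [] \<Rightarrow> p | a # t \<Rightarrow> (t, h x (snd p) a))"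
    for x :: 'a and p :: "'c list \<times> 'b"
  have it: "length xs \<le> k \<Longrightarrow> (stp x ^^ k) (xs, acc) = ([], foldl (h x) acc xs)" for xs k acc x
  proof (induction xs arbitrary: k acc)
    case Nil
    have "(stp x ^^ k) ([], acc) = ([], acc)" by (induction k) (auto simp: stp_def)
    then show ?case by simp
  next
    case (Cons a xs)
    then obtain k' where k: "k = Suc k'" "length xs \<le> k'" by (cases k) auto
    have "(stp x ^^ k) (a # xs, acc) = (stp x ^^ k') (stp x (a # xs, acc))"
      unfolding k(1) funpow_Suc_right by simp
    also have "\<dots> = (stp x ^^ k') (xs, h x acc a)" by (simp add: stp_def)
    also have "\<dots> = ([], foldl (h x) (h x acc a) xs)" using Cons.IH[OF k(2)] by simp
    finally show ?case by simp
  qed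
  have hr: "cp (\<lambda>r. h (fst (fst r)) (snd (snd (fst r))) (fst (snd r)))"
    by (rule cp_cong[OF cp_comp[OF h, of "\<lambda>r. (fst (fst r), snd (snd (fst r)), fst (snd r))"]])
       (intro cp_intros, simp)
  have cst: "cp (\<lambda>q. stp (fst q) (snd q))" unfolding stp_def
    by (intro cp_intros hr)
  have "cp (\<lambda>x. snd ((stp x ^^ enc (l x)) (l x, z x)))"
    by (intro cp_intros cst l z)
  then show ?thesis by (rule cp_cong) (simp add: it enc_list_len)
qed

lemma cp_rev[cp_intros]: "cp l \<Longrightarrow> cp (\<lambda>x. rev (l x))"
proof -
  assume l: "cp l"
  have C: "cp (\<lambda>x. foldl (\<lambda>acc a. a # acc) [] (l x))" by (intro cp_intros l)
  have E: "foldl (\<lambda>acc a. a # acc) acc xs = rev xs @ acc" for acc xs :: "'b list"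
    by (induction xs arbitrary: acc) auto
  show ?thesis by (rule cp_cong[OF C]) (simp add: E)
qed

lemma cp_append[cp_intros]: "cp l \<Longrightarrow> cp m \<Longrightarrow> cp (\<lambda>x. l x @ m x)"
proof -
  assume l: "cp l" and m: "cp m"
  have C: "cp (\<lambda>x. foldl (\<lambda>acc a. a # acc) (m x) (rev (l x)))" by (intro cp_intros l m)
  have E: "foldl (\<lambda>acc a. a # acc) acc xs = rev xs @ acc" for acc xs :: "'b list"
    by (induction xs arbitrary: acc) auto
  show ?thesis by (rule cp_cong[OF C]) (simp add: E)
qed

lemma cp_map[cp_intros]:
  fixes f :: "'a::encode \<Rightarrow> 'b::encode \<Rightarrow> 'c::encode"
  assumes f: "cp (\<lambda>p. f (fst p) (snd p))" and l: "cp l"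
  shows "cp (\<lambda>x. map (f x) (l x))"
proof -
  have C: "cp (\<lambda>x. rev (foldl (\<lambda>acc a. f x a # acc) [] (l x)))" by (intro cp_intros l cp_app2[OF f])
  have E: "foldl (\<lambda>acc a. f x a # acc) acc xs = rev (map (f x) xs) @ acc" for acc xs x
    by (induction xs arbitrary: acc) auto
  show ?thesis by (rule cp_cong[OF C]) (simp add: E)
qed

lemma cp_filter[cp_intros]:
  fixes f :: "'a::encode \<Rightarrow> 'b::encode \<Rightarrow> bool"
  assumes f: "cp (\<lambda>p. f (fst p) (snd p))" and l: "cp l"
  shows "cp (\<lambda>x. filter (f x) (l x))"
proof -
  have C: "cp (\<lambda>x. rev (foldl (\<lambda>acc a. if f x a then a # acc else acc) [] (l x)))" by (intro cp_intros l cp_app2[OF f])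
  have E: "foldl (\<lambda>acc a. if f x a then a # acc else acc) acc xs = rev (filter (f x) xs) @ acc" for acc xs x
    by (induction xs arbitrary: acc) auto
  show ?thesis by (rule cp_cong[OF C]) (simp add: E)
qed

lemma cp_concat[cp_intros]: "cp l \<Longrightarrow> cp (\<lambda>x. concat (l x))"
proof -
  assume l: "cp l"
  have C: "cp (\<lambda>x. foldl (\<lambda>acc a. acc @ a) [] (l x))" by (intro cp_intros l)
  have E: "foldl (\<lambda>acc a. acc @ a) acc xs = acc @ concat xs" for acc :: "'b list" and xs
    by (induction xs arbitrary: acc) auto
  show ?thesis by (rule cp_cong[OF C]) (simp add: E)
qed

lemma cp_length[cp_intros]: "cp l \<Longrightarrow> cp (\<lambda>x. length (l x))"
proof -
  assume l: "cp l"
  have C: "cp (\<lambda>x. foldl (\<lambda>acc a. Suc acc) 0 (l x))" by (intro cp_intros l)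
  have E: "foldl (\<lambda>acc a. Suc acc) acc xs = acc + length xs" for acc :: nat and xs :: "'b list"
    by (induction xs arbitrary: acc) auto
  show ?thesis by (rule cp_cong[OF C]) (simp add: E)
qed

lemma cp_ex[cp_intros]:
  fixes f :: "'a::encode \<Rightarrow> 'b::encode \<Rightarrow> bool"
  assumes f: "cp (\<lambda>p. f (fst p) (snd p))" and l: "cp l"
  shows "cp (\<lambda>x. \<exists>a\<in>set (l x). f x a)"
proof -
  have C: "cp (\<lambda>x. foldl (\<lambda>acc a. acc \<or> f x a) False (l x))" by (intro cp_intros l cp_app2[OF f])
  have E: "foldl (\<lambda>acc a. acc \<or> f x a) acc xs = (acc \<or> (\<exists>a\<in>set xs. f x a))" for acc xs x
    by (induction xs arbitrary: acc) auto
  show ?thesis by (rule cp_cong[OF C]) (simp add: E)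
qed

lemma cp_all[cp_intros]:
  fixes f :: "'a::encode \<Rightarrow> 'b::encode \<Rightarrow> bool"
  assumes f: "cp (\<lambda>p. f (fst p) (snd p))" and l: "cp l"
  shows "cp (\<lambda>x. \<forall>a\<in>set (l x). f x a)"
proof -
  have C: "cp (\<lambda>x. foldl (\<lambda>acc a. acc \<and> f x a) True (l x))" by (intro cp_intros l cp_app2[OF f])
  have E: "foldl (\<lambda>acc a. acc \<and> f x a) acc xs = (acc \<and> (\<forall>a\<in>set xs. f x a))" for acc xs x
    by (induction xs arbitrary: acc) auto
  show ?thesis by (rule cp_cong[OF C]) (simp add: E)
qed

lemma cp_tl[cp_intros]: "cp l \<Longrightarrow> cp (\<lambda>x. tl (l x))"
proof -
  assume l: "cp l"
  have "cp (\<lambda>x. case l x of [] \<Rightarrow> [] | a # t \<Rightarrow> t)" by (intro cp_intros l)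
  then show ?thesis by (rule cp_cong) (simp split: list.split)
qed

lemma cp_drop[cp_intros]: "cp n \<Longrightarrow> cp l \<Longrightarrow> cp (\<lambda>x. drop (n x) (l x))"
proof -
  assume n: "cp n" and l: "cp l"
  have C: "cp (\<lambda>x. ((\<lambda>xs. tl xs) ^^ n x) (l x))" by (intro cp_intros n l)
  have E: "((\<lambda>xs. tl xs) ^^ k) xs = drop k xs" for k and xs :: "'b list"
    by (induction k arbitrary: xs) (auto simp: drop_Suc drop_tl)
  show ?thesis by (rule cp_cong[OF C]) (simp add: E)
qed

definition nthd :: "'a \<Rightarrow> 'a list \<Rightarrow> nat \<Rightarrow> 'a" where
  "nthd d xs i = (case drop i xs of [] \<Rightarrow> d | a # t \<Rightarrow> a)"

lemma nthd_eq: "nthd d xs i = (if i < length xs then xs ! i else d)"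
  by (auto simp: nthd_def Cons_nth_drop_Suc[symmetric] split: list.split)

lemma cp_nthd[cp_intros]: "cp d \<Longrightarrow> cp l \<Longrightarrow> cp i \<Longrightarrow> cp (\<lambda>x. nthd (d x) (l x) (i x))"
  unfolding nthd_def by (intro cp_intros)

lemma cp_upt0: "cp n \<Longrightarrow> cp (\<lambda>x. [0..<n x])"
proof -
  assume n: "cp n"
  have C: "cp (\<lambda>x. ((\<lambda>l. l @ [length l]) ^^ n x) [])" by (intro cp_intros n)
  have E: "((\<lambda>l. l @ [length l]) ^^ k) [] = [0..<k]" for k
    by (induction k) auto
  show ?thesis by (rule cp_cong[OF C]) (simp add: E)
qed

lemma cp_upt[cp_intros]: "cp a \<Longrightarrow> cp b \<Longrightarrow> cp (\<lambda>x. [a x..<b x])"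
proof -
  assume a: "cp a" and b: "cp b"
  have C: "cp (\<lambda>x. map (\<lambda>i. a x + i) [0..<b x - a x])" by (intro cp_intros cp_upt0 a b cp_app1[OF a])
  have E: "map (\<lambda>i. m + i) [0..<k - m] = [m..<k]" for m k
    by (induction k) (auto simp: Suc_diff_le)
  show ?thesis by (rule cp_cong[OF C]) (simp add: E)
qed

lemma cp_replicate[cp_intros]: "cp n \<Longrightarrow> cp a \<Longrightarrow> cp (\<lambda>x. replicate (n x) (a x))"
proof -
  assume n: "cp n" and a: "cp a"
  have C: "cp (\<lambda>x. ((\<lambda>l. a x # l) ^^ n x) [])" by (intro cp_intros n a cp_app1[OF a])
  have E: "((\<lambda>l. c # l) ^^ k) [] = replicate k c" for k c
    by (induction k) auto
  show ?thesis by (rule cp_cong[OF C]) (simp add: E)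
qed

lemma cp_max[cp_intros]: "cp f \<Longrightarrow> cp g \<Longrightarrow> cp (\<lambda>x. max (f x) (g x) :: nat)"
proof -
  assume f: "cp f" and g: "cp g"
  show ?thesis unfolding max_def by (intro cp_intros cp_app1[OF f] cp_app1[OF g])
qed

lemma div_least: "(a::nat) div b = (LEAST q. (b = 0 \<or> a < b * Suc q) \<or> a \<le> q)"
proof (rule Least_equality[symmetric])
  show "(b = 0 \<or> a < b * Suc (a div b)) \<or> a \<le> a div b"
    by (cases "b = 0") (auto simp: dividend_less_times_div)
  fix y assume "(b = 0 \<or> a < b * Suc y) \<or> a \<le> y"
  then show "a div b \<le> y"
  proof (elim disjE)
    assume "b = 0" then show ?thesis by simp
  next
    assume "a < b * Suc y" then have "a div b < Suc y" by (simp add: less_mult_imp_div_less mult.commute)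
    then show ?thesis by simp
  next
    assume "a \<le> y" then show ?thesis using div_le_dividend[of a b] by linarith
  qed
qed

lemma cp_div[cp_intros]: "cp f \<Longrightarrow> cp g \<Longrightarrow> cp (\<lambda>x. f x div g x :: nat)"
proof -
  assume f: "cp f" and g: "cp g"
  show ?thesis unfolding div_least by (intro cp_intros cp_app1[OF f] cp_app1[OF g])
qed

lemma cp_mod[cp_intros]: "cp f \<Longrightarrow> cp g \<Longrightarrow> cp (\<lambda>x. f x mod g x :: nat)"
proof -
  assume f: "cp f" and g: "cp g"
  show ?thesis unfolding minus_div_mult_eq_mod[symmetric] by (intro cp_intros cp_app1[OF f] cp_app1[OF g])
qed

lemma cp_dvd_nat[cp_intros]: "cp f \<Longrightarrow> cp g \<Longrightarrow> cp (\<lambda>x. f x dvd (g x :: nat))"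
proof -
  assume f: "cp f" and g: "cp g"
  show ?thesis unfolding dvd_eq_mod_eq_0 by (intro cp_intros cp_app1[OF f] cp_app1[OF g])
qed

lemma cp_inat[cp_intros]: "cp f \<Longrightarrow> cp (\<lambda>x. nat (f x :: int))"
  apply (erule cpE)
  subgoal for gf by (rule cpI[OF rc_comp[OF rc_pd1, of gf]]) (auto simp: enc_int_def)
  done

lemma cp_ineg[cp_intros]: "cp f \<Longrightarrow> cp (\<lambda>x. nat (- f x :: int))"
  apply (erule cpE)
  subgoal for gf by (rule cpI[OF rc_comp[OF rc_pd2, of gf]]) (auto simp: enc_int_def)
  done

lemma cp_mkint: "cp f \<Longrightarrow> cp g \<Longrightarrow> cp (\<lambda>x. int (f x) - int (g x))"
  apply (erule cpE, erule cpE)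
  subgoal for gf gg
    by (rule cpI[OF rc_comp2[OF rc2_pe rc_comp2[OF rc2_monus, of gf gg] rc_comp2[OF rc2_monus, of gg gf]]])
       (auto simp: enc_int_def nat_diff_distrib)
  done

lemma cp_int[cp_intros]: "cp f \<Longrightarrow> cp (\<lambda>x. int (f x))"
  by (rule cp_cong[OF cp_mkint[OF _ cp_const[of 0]]]) auto

lemma int_split_eq: "(i::int) = int (nat i) - int (nat (- i))" by simp

lemma cp_iadd[cp_intros]: "cp f \<Longrightarrow> cp g \<Longrightarrow> cp (\<lambda>x. f x + g x :: int)"
proof -
  assume f: "cp f" and g: "cp g"
  have "cp (\<lambda>x. int (nat (f x) + nat (g x)) - int (nat (- f x) + nat (- g x)))"
    by (intro cp_mkint cp_intros f g)
  then show ?thesis by (rule cp_cong) simp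
qed

lemma cp_iuminus[cp_intros]: "cp f \<Longrightarrow> cp (\<lambda>x. - f x :: int)"
proof -
  assume f: "cp f"
  have "cp (\<lambda>x. int (nat (- f x)) - int (nat (f x)))"
    by (intro cp_mkint cp_intros f)
  then show ?thesis by (rule cp_cong) simp
qed

lemma cp_isub[cp_intros]: "cp f \<Longrightarrow> cp g \<Longrightarrow> cp (\<lambda>x. f x - g x :: int)"
proof -
  assume f: "cp f" and g: "cp g"
  have "cp (\<lambda>x. f x + - g x)" by (intro cp_intros f g)
  then show ?thesis by (rule cp_cong) simp
qed

lemma cp_imult[cp_intros]: "cp f \<Longrightarrow> cp g \<Longrightarrow> cp (\<lambda>x. f x * g x :: int)"
proof -
  assume f: "cp f" and g: "cp g"
  have C: "cp (\<lambda>x. int (nat (f x) * nat (g x) + nat (- f x) * nat (- g x)) -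
                int (nat (f x) * nat (- g x) + nat (- f x) * nat (g x)))"
    by (intro cp_mkint cp_intros f g)
  have E: "int (nat a * nat b + nat (- a) * nat (- b)) - int (nat a * nat (- b) + nat (- a) * nat b) = a * b"
    for a b :: int
  proof -
    have "int (nat a * nat b + nat (- a) * nat (- b)) - int (nat a * nat (- b) + nat (- a) * nat b) =
      (int (nat a) - int (nat (- a))) * (int (nat b) - int (nat (- b)))" by (simp add: algebra_simps)
    also have "\<dots> = a * b" by simp
    finally show ?thesis .
  qed
  show ?thesis by (rule cp_cong[OF C]) (rule E)
qed

lemma cp_iless[cp_intros]: "cp f \<Longrightarrow> cp g \<Longrightarrow> cp (\<lambda>x. f x < (g x :: int))"
proof -
  assume f: "cp f" and g: "cp g"
  have "cp (\<lambda>x. nat (f x) + nat (- g x) < nat (g x) + nat (- f x))" by (intro cp_intros f g)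
  then show ?thesis by (rule cp_cong) linarith
qed

lemma cp_ile[cp_intros]: "cp f \<Longrightarrow> cp g \<Longrightarrow> cp (\<lambda>x. f x \<le> (g x :: int))"
proof -
  assume f: "cp f" and g: "cp g"
  have "cp (\<lambda>x. \<not> g x < f x)" by (intro cp_intros f g)
  then show ?thesis by (rule cp_cong) linarith
qed

lemma cp_ieq[cp_intros]: "cp f \<Longrightarrow> cp g \<Longrightarrow> cp (\<lambda>x. f x = (g x :: int))"
proof -
  assume f: "cp f" and g: "cp g"
  have "cp (\<lambda>x. f x \<le> g x \<and> g x \<le> f x)" by (intro cp_intros f g)
  then show ?thesis by (rule cp_cong) linarith
qed

lemma cp_iabs[cp_intros]: "cp f \<Longrightarrow> cp (\<lambda>x. \<bar>f x\<bar> :: int)"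
proof -
  assume f: "cp f"
  have "cp (\<lambda>x. int (nat (f x) + nat (- f x)))" by (intro cp_intros f)
  then show ?thesis by (rule cp_cong) linarith
qed

lemma cp_idvd[cp_intros]: "cp f \<Longrightarrow> cp g \<Longrightarrow> cp (\<lambda>x. f x dvd (g x :: int))"
proof -
  assume f: "cp f" and g: "cp g"
  have "cp (\<lambda>x. nat \<bar>f x\<bar> dvd nat \<bar>g x\<bar>)" by (intro cp_intros f g)
  then show ?thesis by (rule cp_cong) (simp add: nat_dvd_iff)
qed

lemma cp_idiv[cp_intros]: "cp f \<Longrightarrow> cp g \<Longrightarrow> cp (\<lambda>x. int (f x div g x))"
  by (intro cp_intros)

lemma cp_int_encode[cp_intros]: "cp f \<Longrightarrow> cp (\<lambda>x. int_encode (f x))"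
proof -
  assume f: "cp f"
  have "cp (\<lambda>x. if 0 \<le> f x then 2 * nat (f x) else Suc (2 * nat (- f x - 1)))" by (intro cp_intros f)
  then show ?thesis by (rule cp_cong) (simp add: int_encode_def sum_encode_def)
qed


type_synonym lin = "int list \<times> int"
type_synonym atom = "nat \<times> int \<times> lin"

definition coeff :: "int list \<Rightarrow> nat \<Rightarrow> int" where "coeff cs i = nthd 0 cs i"

definition lval :: "lin \<Rightarrow> (nat \<Rightarrow> int) \<Rightarrow> int" where
  "lval l e = (\<Sum>i<length (fst l). coeff (fst l) i * e i) + snd l"

lemma coeff_eq: "coeff cs i = (if i < length cs then cs ! i else 0)"
  by (simp add: coeff_def nthd_eq)

lemma sum_coeff_ge: "length cs \<le> n \<Longrightarrow> (\<Sum>i<n. coeff cs i * e i) = (\<Sum>i<length cs. coeff cs i * e i)"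
  by (rule sum.mono_neutral_right) (auto simp: coeff_eq)

lemma lval_alt: "length (fst l) \<le> n \<Longrightarrow> lval l e = (\<Sum>i<n. coeff (fst l) i * e i) + snd l"
  by (simp add: lval_def sum_coeff_ge[of _ n])

definition ladd :: "lin \<Rightarrow> lin \<Rightarrow> lin" where
  "ladd l1 l2 = (map (\<lambda>i. coeff (fst l1) i + coeff (fst l2) i) [0..<max (length (fst l1)) (length (fst l2))],
                 snd l1 + snd l2)"
definition lscale :: "int \<Rightarrow> lin \<Rightarrow> lin" where
  "lscale k l = (map (\<lambda>c. k * c) (fst l), k * snd l)"
definition lconst :: "int \<Rightarrow> lin" where "lconst c = ([], c)"
definition lvar :: "nat \<Rightarrow> lin" where "lvar i = (replicate i 0 @ [1], 0)"
definition lzero :: "nat \<Rightarrow> lin \<Rightarrow> lin" where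
  "lzero i l = (map (\<lambda>j. if j = i then 0 else coeff (fst l) j) [0..<length (fst l)], snd l)"
definition lsubst :: "nat \<Rightarrow> lin \<Rightarrow> lin \<Rightarrow> lin" where
  "lsubst i s l = ladd (lzero i l) (lscale (coeff (fst l) i) s)"

lemma coeff_ladd[simp]: "coeff (fst (ladd l1 l2)) j = coeff (fst l1) j + coeff (fst l2) j"
  by (auto simp: ladd_def coeff_eq)
lemma coeff_lscale[simp]: "coeff (fst (lscale k l)) j = k * coeff (fst l) j"
  by (auto simp: lscale_def coeff_eq)
lemma coeff_lconst[simp]: "coeff (fst (lconst c)) j = 0"
  by (auto simp: lconst_def coeff_eq)
lemma coeff_lvar[simp]: "coeff (fst (lvar i)) j = (if j = i then 1 else 0)"
  by (auto simp: lvar_def coeff_eq nth_append)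
lemma coeff_lzero[simp]: "coeff (fst (lzero i l)) j = (if j = i then 0 else coeff (fst l) j)"
  by (auto simp: lzero_def coeff_eq)

lemma snd_ladd[simp]: "snd (ladd l1 l2) = snd l1 + snd l2" by (simp add: ladd_def)
lemma snd_lscale[simp]: "snd (lscale k l) = k * snd l" by (simp add: lscale_def)
lemma snd_lzero[simp]: "snd (lzero i l) = snd l" by (simp add: lzero_def)
lemma snd_lvar[simp]: "snd (lvar i) = 0" by (simp add: lvar_def)
lemma len_lscale[simp]: "length (fst (lscale k l)) = length (fst l)" by (simp add: lscale_def)
lemma len_lzero[simp]: "length (fst (lzero i l)) = length (fst l)" by (simp add: lzero_def)
lemma len_lvar[simp]: "length (fst (lvar i)) = Suc i" by (simp add: lvar_def)

lemma lval_ladd[simp]: "lval (ladd l1 l2) e = lval l1 e + lval l2 e"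
proof -
  define n where "n = max (length (fst l1)) (length (fst l2))"
  have "length (fst (ladd l1 l2)) \<le> n" by (simp add: ladd_def n_def)
  then have "lval (ladd l1 l2) e = (\<Sum>i<n. coeff (fst (ladd l1 l2)) i * e i) + snd (ladd l1 l2)"
    by (rule lval_alt)
  also have "\<dots> = (\<Sum>i<n. coeff (fst l1) i * e i) + snd l1 + ((\<Sum>i<n. coeff (fst l2) i * e i) + snd l2)"
    by (simp add: sum.distrib algebra_simps)
  also have "\<dots> = lval l1 e + lval l2 e"
    by (simp add: lval_alt[symmetric] n_def)
  finally show ?thesis .
qed

lemma lval_lscale[simp]: "lval (lscale k l) e = k * lval l e"
proof -
  have "lval (lscale k l) e = (\<Sum>i<length (fst l). coeff (fst (lscale k l)) i * e i) + snd (lscale k l)"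
    by (rule lval_alt) simp
  also have "\<dots> = k * lval l e" by (simp add: lval_def sum_distrib_left algebra_simps)
  finally show ?thesis .
qed

lemma lval_lconst[simp]: "lval (lconst c) e = c"
  by (simp add: lval_def lconst_def)

lemma lval_lvar[simp]: "lval (lvar i) e = e i"
proof -
  have "lval (lvar i) e = (\<Sum>j<Suc i. coeff (fst (lvar i)) j * e j) + snd (lvar i)"
    by (rule lval_alt) simp
  also have "\<dots> = e i" by simp
  finally show ?thesis .
qed

lemma lval_lzero: "lval (lzero i l) e = lval l (e(i := 0))"
proof -
  have "lval (lzero i l) e = (\<Sum>j<length (fst l). coeff (fst (lzero i l)) j * e j) + snd (lzero i l)"
    by (rule lval_alt) simp
  also have "\<dots> = lval l (e(i := 0))"
    by (simp add: lval_def) (rule sum.cong, auto)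
  finally show ?thesis .
qed

lemma lval_upd: "lval l (e(i := v)) = lval (lzero i l) e + coeff (fst l) i * v"
proof -
  define n where "n = length (fst l)"
  have "lval l (e(i := v)) = (\<Sum>j<n. coeff (fst l) j * (e(i := v)) j) + snd l"
    by (simp add: lval_def n_def)
  also have "(\<Sum>j<n. coeff (fst l) j * (e(i := v)) j) =
      (\<Sum>j<n. coeff (fst (lzero i l)) j * e j) + (\<Sum>j<n. if j = i then coeff (fst l) j * v else 0)"
  proof -
    have "(\<Sum>j<n. coeff (fst l) j * (e(i := v)) j) =
      (\<Sum>j<n. coeff (fst (lzero i l)) j * e j + (if j = i then coeff (fst l) j * v else 0))"
      by (rule sum.cong) auto
    then show ?thesis by (simp only: sum.distrib)
  qed
  also have "(\<Sum>j<n. if j = i then coeff (fst l) j * v else 0) = coeff (fst l) i * v"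
    by (auto simp: coeff_eq n_def)
  also have "(\<Sum>j<n. coeff (fst (lzero i l)) j * e j) + coeff (fst l) i * v + snd l =
      lval (lzero i l) e + coeff (fst l) i * v"
  proof -
    have "lval (lzero i l) e = (\<Sum>j<n. coeff (fst (lzero i l)) j * e j) + snd (lzero i l)"
      by (rule lval_alt) (simp add: n_def)
    then show ?thesis by simp
  qed
  finally show ?thesis unfolding fun_upd_def by simp
qed

lemma lval_lzero_upd[simp]: "lval (lzero i l) (e(i := v)) = lval (lzero i l) e"
  using lval_upd[of "lzero i l" e i v] by (simp add: lval_lzero)

lemma lval_lzero_upd': "lval (lzero i l) (e(i := v)) = lval (lzero i l) (e(i := w))"
  by simp

lemma lval_lsubst[simp]: "lval (lsubst i s l) e = lval l (e(i := lval s e))"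
  by (simp add: lsubst_def lval_upd[of l e i])

lemma lval_coeff0: "coeff (fst l) i = 0 \<Longrightarrow> lval l (e(i := v)) = lval l (e(i := w))"
  by (simp add: lval_upd)

definition akind :: "atom \<Rightarrow> nat" where "akind a = fst a"
definition amod :: "atom \<Rightarrow> int" where "amod a = fst (snd a)"
definition aterm :: "atom \<Rightarrow> lin" where "aterm a = snd (snd a)"
definition dm :: "atom \<Rightarrow> int" where "dm a = max 1 \<bar>amod a\<bar>"

lemma atom_sel[simp]: "akind (k, d, t) = k" "amod (k, d, t) = d" "aterm (k, d, t) = t"
  by (simp_all add: akind_def amod_def aterm_def)

lemma dm_pos: "0 < dm a" by (simp add: dm_def)

definition aval :: "atom \<Rightarrow> (nat \<Rightarrow> int) \<Rightarrow> bool" where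
  "aval a e = (if akind a = 0 then 0 < lval (aterm a) e
               else if akind a = 1 then dm a dvd lval (aterm a) e
               else \<not> dm a dvd lval (aterm a) e)"

definition cval :: "atom list \<Rightarrow> (nat \<Rightarrow> int) \<Rightarrow> bool" where
  "cval C e = (\<forall>a\<in>set C. aval a e)"
definition dval :: "atom list list \<Rightarrow> (nat \<Rightarrow> int) \<Rightarrow> bool" where
  "dval D e = (\<exists>C\<in>set D. cval C e)"

definition negatom :: "atom \<Rightarrow> atom" where
  "negatom a = (if akind a = 0 then (0, 0, ladd (lconst 1) (lscale (-1) (aterm a)))
                else if akind a = 1 then (2, amod a, aterm a) else (1, amod a, aterm a))"

lemma aval_negatom[simp]: "aval (negatom a) e = (\<not> aval a e)"
  by (auto simp: negatom_def aval_def dm_def)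

definition dand :: "atom list list \<Rightarrow> atom list list \<Rightarrow> atom list list" where
  "dand D1 D2 = concat (map (\<lambda>C1. map (\<lambda>C2. C1 @ C2) D2) D1)"

lemma dval_dand[simp]: "dval (dand D1 D2) e = (dval D1 e \<and> dval D2 e)"
  by (auto simp: dand_def dval_def cval_def)

definition negC :: "atom list \<Rightarrow> atom list list" where
  "negC C = map (\<lambda>a. [negatom a]) C"

lemma dval_negC[simp]: "dval (negC C) e = (\<not> cval C e)"
  by (auto simp: negC_def dval_def cval_def)

definition dneg :: "atom list list \<Rightarrow> atom list list" where
  "dneg D = foldl (\<lambda>acc C. dand acc (negC C)) [[]] D"

lemma dval_Nil[simp]: "dval [] e = False" and dval_Cons[simp]: "dval (C # D) e = (cval C e \<or> dval D e)"
  by (auto simp: dval_def)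
lemma cval_Nil[simp]: "cval [] e = True" and cval_Cons[simp]: "cval (a # C) e = (aval a e \<and> cval C e)"
  by (auto simp: cval_def)

lemma dval_dneg_aux: "dval (foldl (\<lambda>acc C. dand acc (negC C)) acc D) e = (dval acc e \<and> \<not> dval D e)"
  by (induction D arbitrary: acc) auto

lemma dval_dneg[simp]: "dval (dneg D) e = (\<not> dval D e)"
  by (simp add: dneg_def dval_dneg_aux)

subsection \<open>Quantifier elimination for one conjunction\<close>

definition acoef :: "nat \<Rightarrow> atom \<Rightarrow> int" where "acoef i a = coeff (fst (aterm a)) i"

definition scale_atom :: "nat \<Rightarrow> int \<Rightarrow> atom \<Rightarrow> atom" where
  "scale_atom i L a = (if acoef i a = 0 then a else
     (akind a, (L div \<bar>acoef i a\<bar>) * amod a,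
      ladd (lzero i (lscale (L div \<bar>acoef i a\<bar>) (aterm a))) (lscale (sgn (acoef i a)) (lvar i))))"

definition asubst :: "nat \<Rightarrow> lin \<Rightarrow> atom \<Rightarrow> atom" where
  "asubst i s a = (akind a, amod a, lsubst i s (aterm a))"

lemma aval_asubst[simp]: "aval (asubst i s a) e = aval a (e(i := lval s e))"
  by (simp add: asubst_def aval_def dm_def)

definition cC0 :: "nat \<Rightarrow> atom list \<Rightarrow> atom list" where
  "cC0 i C = (0, 0, ladd (lvar i) (lconst 1)) # C"
definition cL :: "nat \<Rightarrow> atom list \<Rightarrow> int" where
  "cL i C = foldl (\<lambda>m a. if acoef i a \<noteq> 0 then m * \<bar>acoef i a\<bar> else m) 1 (cC0 i C)"
definition cC1 :: "nat \<Rightarrow> atom list \<Rightarrow> atom list" where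
  "cC1 i C = (1, cL i C, lvar i) # map (scale_atom i (cL i C)) (cC0 i C)"
definition cdelta :: "nat \<Rightarrow> atom list \<Rightarrow> int" where
  "cdelta i C = foldl (\<lambda>m a. if akind a \<noteq> 0 then m * dm a else m) 1 (cC1 i C)"
definition cLB :: "nat \<Rightarrow> atom list \<Rightarrow> atom list" where
  "cLB i C = filter (\<lambda>a. akind a = 0 \<and> acoef i a = 1) (cC1 i C)"
definition cands :: "nat \<Rightarrow> atom list \<Rightarrow> lin list" where
  "cands i C = concat (map (\<lambda>b. map (\<lambda>j. ladd (lscale (-1) (lzero i (aterm b))) (lconst (int j)))
      [1..<nat (cdelta i C) + 1]) (cLB i C))"
definition elim :: "nat \<Rightarrow> atom list \<Rightarrow> atom list list" where
  "elim i C = map (\<lambda>s. map (asubst i s) (cC1 i C)) (cands i C)"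
definition elimD :: "nat \<Rightarrow> atom list list \<Rightarrow> atom list list" where
  "elimD i D = concat (map (elim i) D)"

lemma foldl_prod_pos:
  "0 < (m::int) \<Longrightarrow> (\<And>a. a \<in> set xs \<Longrightarrow> P a \<Longrightarrow> 0 < f a) \<Longrightarrow> 0 < foldl (\<lambda>m a. if P a then m * f a else m) m xs"
proof (induction xs arbitrary: m)
  case (Cons a xs)
  have "0 < (if P a then m * f a else m)" using Cons.prems by auto
  then show ?case using Cons.IH[of "if P a then m * f a else m"] Cons.prems(2) by auto
qed simp

lemma foldl_prod_dvd:
  "(\<And>a. a \<in> set xs \<Longrightarrow> P a \<Longrightarrow> 0 < f a) \<Longrightarrow> x \<in> set xs \<Longrightarrow> P x \<Longrightarrow>
    (f x :: int) dvd foldl (\<lambda>m a. if P a then m * f a else m) m xs"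
proof (induction xs arbitrary: m)
  case (Cons a xs)
  show ?case
  proof (cases "x = a")
    case True
    have "f x dvd (if P a then m * f a else m)" using True Cons.prems by simp
    moreover have "(if P a then m * f a else m) dvd foldl (\<lambda>m a. if P a then m * f a else m) (if P a then m * f a else m) xs"
    proof -
      have "m' dvd foldl (\<lambda>m a. if P a then m * f a else m) m' ys" for m' ys
        by (induction ys arbitrary: m') (auto intro: dvd_mult_left)
      then show ?thesis .
    qed
    ultimately show ?thesis by (auto intro: dvd_trans)
  next
    case False then show ?thesis using Cons by auto
  qed
qed simp

lemma cL_pos: "0 < cL i C"
  unfolding cL_def by (rule foldl_prod_pos) auto

lemma cL_dvd: "a \<in> set (cC0 i C) \<Longrightarrow> acoef i a \<noteq> 0 \<Longrightarrow> \<bar>acoef i a\<bar> dvd cL i C"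
  unfolding cL_def by (rule foldl_prod_dvd) auto

lemma cdelta_pos: "0 < cdelta i C"
  unfolding cdelta_def by (rule foldl_prod_pos) (auto simp: dm_pos)

lemma cdelta_dvd: "a \<in> set (cC1 i C) \<Longrightarrow> akind a \<noteq> 0 \<Longrightarrow> dm a dvd cdelta i C"
  unfolding cdelta_def by (rule foldl_prod_dvd) (auto simp: dm_pos)


lemma aval_val: "aval a e = (if akind a = 0 then 0 < lval (aterm a) e
               else if akind a = 1 then dm a dvd lval (aterm a) e
               else \<not> dm a dvd lval (aterm a) e)"
  by (simp add: aval_def)

lemma aval_cong: "lval (aterm a) e1 = lval (aterm a) e2 \<Longrightarrow> aval a e1 = aval a e2"
  by (simp add: aval_def)

lemma acoef_scale[simp]: "acoef i (scale_atom i L a) = sgn (acoef i a)"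
  by (auto simp: scale_atom_def acoef_def)

lemma akind_scale[simp]: "akind (scale_atom i L a) = akind a"
  by (auto simp: scale_atom_def)

lemma scale_correct:
  assumes dvd': "acoef i a \<noteq> 0 \<Longrightarrow> \<bar>acoef i a\<bar> dvd L" and L: "0 < L"
  shows "aval (scale_atom i L a) (e(i := L * x)) = aval a (e(i := x))"
proof (cases "acoef i a = 0")
  case True
  then show ?thesis unfolding scale_atom_def using True
    by (auto intro!: aval_cong lval_coeff0 simp: acoef_def)
next
  case False
  have dvd: "\<bar>acoef i a\<bar> dvd L" using dvd' False by blast
  define c where "c = acoef i a"
  define m where "m = L div \<bar>c\<bar>"
  define t where "t = aterm a"
  have Lm: "L = m * \<bar>c\<bar>" using dvd unfolding m_def c_def by simp
  have cpos: "0 < \<bar>c\<bar>" using False c_def by simp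
  have "0 < m * \<bar>c\<bar>" using Lm L by simp
  then have mpos: "0 < m" using cpos by (simp add: zero_less_mult_iff)
  have mc: "m * c = sgn c * L" by (metis Lm mult.commute mult.left_commute sgn_mult_abs)
  have t_upd: "lval t (e(i := x)) = lval t (e(i := 0)) + c * x"
    using lval_upd[of t e i x] lval_lzero[of i t e] unfolding c_def t_def acoef_def by simp
  have new: "lval (ladd (lzero i (lscale m t)) (lscale (sgn c) (lvar i))) (e(i := L * x)) =
      m * lval t (e(i := x))"
    using mc by (simp add: lval_lzero t_upd algebra_simps)
  have sa: "scale_atom i L a = (akind a, m * amod a, ladd (lzero i (lscale m t)) (lscale (sgn c) (lvar i)))"
    using False unfolding scale_atom_def m_def c_def t_def by simp
  have dvdeq: "max 1 \<bar>m * d\<bar> dvd m * v \<longleftrightarrow> max 1 \<bar>d\<bar> dvd v" for d v :: int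
  proof (cases "d = 0")
    case True then show ?thesis by simp
  next
    case False
    then have "max 1 \<bar>m * d\<bar> = m * \<bar>d\<bar>" "max 1 \<bar>d\<bar> = \<bar>d\<bar>" using mpos
      by (auto simp: abs_mult max_def) (smt (verit) mult_le_cancel_left1)
    then show ?thesis using mpos by (simp add: dvd_mult_cancel_left)
  qed
  show ?thesis
    unfolding sa aval_val[of "(akind a, m * amod a, _)"] atom_sel new aval_val[of a] t_def[symmetric]
    using mpos dvdeq[of "amod a" "lval t (e(i := x))"]
    by (auto simp: dm_def zero_less_mult_iff)
qed

lemma cC0_correct: "(\<exists>x\<ge>0. cval C (e(i := x))) = (\<exists>x. cval (cC0 i C) (e(i := x)))"
  by (auto simp: cC0_def aval_def)

lemma scale_C0: "a \<in> set (cC0 i C) \<Longrightarrow>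
    aval (scale_atom i (cL i C) a) (e(i := cL i C * x)) = aval a (e(i := x))"
  by (rule scale_correct[OF cL_dvd cL_pos])

lemma cC1_correct: "(\<exists>x. cval (cC0 i C) (e(i := x))) = (\<exists>y. cval (cC1 i C) (e(i := y)))"
proof
  assume "\<exists>x. cval (cC0 i C) (e(i := x))"
  then obtain x where x: "cval (cC0 i C) (e(i := x))" by blast
  have "aval (1, cL i C, lvar i) (e(i := cL i C * x))" using cL_pos[of i C]
    by (simp add: aval_def dm_def)
  moreover have "\<forall>a\<in>set (cC0 i C). aval (scale_atom i (cL i C) a) (e(i := cL i C * x))"
    using x scale_C0 unfolding cval_def by blast
  ultimately have "cval (cC1 i C) (e(i := cL i C * x))"
    unfolding cC1_def cval_def by auto
  then show "\<exists>y. cval (cC1 i C) (e(i := y))" by blast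
next
  assume "\<exists>y. cval (cC1 i C) (e(i := y))"
  then obtain y where y: "cval (cC1 i C) (e(i := y))" by blast
  then have "cL i C dvd y" using cL_pos[of i C] by (simp add: cC1_def aval_def dm_def)
  then obtain x where yx: "y = cL i C * x" by blast
  have "\<forall>a\<in>set (cC0 i C). aval (scale_atom i (cL i C) a) (e(i := cL i C * x))"
    using y unfolding yx cC1_def cval_def by auto
  then have "cval (cC0 i C) (e(i := x))"
    using scale_C0 unfolding cval_def by blast
  then show "\<exists>x. cval (cC0 i C) (e(i := x))" by blast
qed

lemma shift_dvd: "(d::int) dvd \<delta> \<Longrightarrow> (d dvd x + c * (y - \<delta>)) = (d dvd x + c * y)"
proof -
  assume d: "d dvd \<delta>"
  have eq: "x + c * (y - \<delta>) = (x + c * y) + - (c * \<delta>)" by (simp add: algebra_simps)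
  have "d dvd - (c * \<delta>)" using d by simp
  then show ?thesis by (simp only: eq dvd_add_left_iff)
qed

lemma cooper:
  fixes Cs :: "atom list" and \<delta> :: int
  assumes coef: "\<forall>a\<in>set Cs. acoef i a \<in> {-1, 0, 1}"
    and b0: "b0 \<in> set Cs" "akind b0 = 0" "acoef i b0 = 1"
    and dpos: "0 < \<delta>" and ddvd: "\<forall>a\<in>set Cs. akind a \<noteq> 0 \<longrightarrow> dm a dvd \<delta>"
    and wit: "cval Cs (e(i := y))"
  shows "\<exists>b\<in>set Cs. akind b = 0 \<and> acoef i b = 1 \<and>
     (\<exists>j::nat. 1 \<le> j \<and> j \<le> nat \<delta> \<and> cval Cs (e(i := - lval (lzero i (aterm b)) e + int j)))"
proof -
  define r where "r a = lval (lzero i (aterm a)) e" for a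
  have V: "lval (aterm a) (e(i := z)) = r a + acoef i a * z" for a z
    by (simp add: r_def lval_upd acoef_def)
  define W where "W z = cval Cs (e(i := z))" for z
  have Wlow: "W z \<Longrightarrow> - r b0 < z" for z
    using b0 unfolding W_def cval_def by (auto simp: aval_def V)
  define base where "base = - r b0 + 1"
  have ex: "\<exists>k::nat. W (base + int k)"
    using wit Wlow[of y] unfolding W_def[symmetric] base_def
    by (intro exI[of _ "nat (y + r b0 - 1)"]) auto
  define k0 where "k0 = (LEAST k::nat. W (base + int k))"
  define y0 where "y0 = base + int k0"
  have Wy0: "W y0" unfolding y0_def k0_def by (rule LeastI_ex[OF ex])
  have ymin: "y0 \<le> z" if "W z" for z
  proof -
    have "- r b0 < z" using Wlow[OF that] .
    then have "z = base + int (nat (z - base))" unfolding base_def by simp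
    then have "W (base + int (nat (z - base)))" using that by simp
    then have "k0 \<le> nat (z - base)" unfolding k0_def by (rule Least_le)
    then show ?thesis unfolding y0_def using \<open>- r b0 < z\<close> base_def by linarith
  qed
  have "\<exists>b\<in>set Cs. akind b = 0 \<and> acoef i b = 1 \<and> y0 \<le> - r b + \<delta>"
  proof (rule ccontr)
    assume "\<not> ?thesis"
    then have big: "\<And>b. b \<in> set Cs \<Longrightarrow> akind b = 0 \<Longrightarrow> acoef i b = 1 \<Longrightarrow> - r b + \<delta> < y0" by force
    have "W (y0 - \<delta>)" unfolding W_def cval_def
    proof
      fix a assume a: "a \<in> set Cs"
      have ay0: "aval a (e(i := y0))" using Wy0 a unfolding W_def cval_def by blast
      have AV: "aval a (e(i := z)) = (if akind a = 0 then 0 < r a + acoef i a * z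
          else if akind a = 1 then dm a dvd r a + acoef i a * z else \<not> dm a dvd r a + acoef i a * z)" for z
        by (simp only: aval_def V)
      show "aval a (e(i := y0 - \<delta>))"
      proof (cases "akind a = 0")
        case False
        then have d: "dm a dvd \<delta>" using ddvd a by blast
        have "(dm a dvd r a + acoef i a * (y0 - \<delta>)) = (dm a dvd r a + acoef i a * y0)"
          by (rule shift_dvd[OF d])
        then show ?thesis using ay0 False unfolding AV by simp
      next
        case True
        then have p: "0 < r a + acoef i a * y0" using ay0 unfolding AV by simp
        have "acoef i a \<in> {-1, 0, 1}" using coef a by blast
        then have "0 < r a + acoef i a * (y0 - \<delta>)"
        proof (elim insertE)
          assume "acoef i a = 1" then show ?thesis using big[OF a True] by simp
        qed (use p dpos in auto)
        then show ?thesis unfolding AV using True by simp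
      qed
    qed
    then have "y0 \<le> y0 - \<delta>" by (rule ymin)
    then show False using dpos by simp
  qed
  then obtain b where b: "b \<in> set Cs" "akind b = 0" "acoef i b = 1" "y0 \<le> - r b + \<delta>" by blast
  have "- r b < y0" using Wy0 b unfolding W_def cval_def by (auto simp: aval_def V)
  define j where "j = nat (y0 + r b)"
  have "1 \<le> j" "j \<le> nat \<delta>" "y0 = - r b + int j" using b \<open>- r b < y0\<close> unfolding j_def by auto
  then show ?thesis using b Wy0 unfolding W_def r_def by (intro bexI[of _ b]) auto
qed

lemma acoef_lvar: "acoef i (k, d, lvar i) = 1" by (simp add: acoef_def)

lemma coef_C1: assumes "a \<in> set (cC1 i C)" shows "acoef i a \<in> {-1, 0, 1}"
proof -
  have s: "sgn c \<in> {-1, 0, 1::int}" for c by (auto simp: sgn_if)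
  from assms have "a = (1, cL i C, lvar i) \<or> (\<exists>a'. a = scale_atom i (cL i C) a')" unfolding cC1_def by auto
  then show ?thesis
  proof (elim disjE exE)
    assume "a = (1, cL i C, lvar i)" then show ?thesis using acoef_lvar by simp
  next
    fix a' assume "a = scale_atom i (cL i C) a'"
    then have "acoef i a = sgn (acoef i a')" by simp
    then show ?thesis using s by metis
  qed
qed

lemma b0_C1: "scale_atom i (cL i C) (0, 0, ladd (lvar i) (lconst 1)) \<in> set (cC1 i C)"
  by (simp add: cC1_def cC0_def)

lemma b0_props: "akind (scale_atom i L (0, 0, ladd (lvar i) (lconst 1))) = 0"
  "acoef i (scale_atom i L (0, 0, ladd (lvar i) (lconst 1))) = 1"
   apply simp
  apply (simp only: acoef_scale)
  apply (simp add: acoef_def)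
  done

lemma lval_cand: "lval (ladd (lscale (-1) (lzero i (aterm b))) (lconst (int j))) e = - lval (lzero i (aterm b)) e + int j"
  by simp


lemma mem_cands: "b \<in> set (cLB i C) \<Longrightarrow> 1 \<le> j \<Longrightarrow> j \<le> nat (cdelta i C) \<Longrightarrow>
   ladd (lscale (-1) (lzero i (aterm b))) (lconst (int j)) \<in> set (cands i C)"
  unfolding cands_def set_concat set_map
  apply (rule UnionI[of "set (map (\<lambda>j. ladd (lscale (-1) (lzero i (aterm b))) (lconst (int j))) [1..<nat (cdelta i C) + 1])"])
   apply (rule imageI)
   apply (rule imageI[of b "set (cLB i C)" "\<lambda>b. map (\<lambda>j. ladd (lscale (-1) (lzero i (aterm b))) (lconst (int j))) [1..<nat (cdelta i C) + 1]"], assumption)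
  apply (simp only: set_map)
  apply (rule rev_image_eqI[of j])
   apply (simp; linarith)
  apply (rule refl)
  done

lemma elim_correct: "dval (elim i C) e = (\<exists>x\<ge>0. cval C (e(i := x)))"
proof -
  have "dval (elim i C) e = (\<exists>s\<in>set (cands i C). cval (cC1 i C) (e(i := lval s e)))"
    by (auto simp: elim_def dval_def cval_def)
  also have "\<dots> = (\<exists>y. cval (cC1 i C) (e(i := y)))"
  proof
    assume "\<exists>s\<in>set (cands i C). cval (cC1 i C) (e(i := lval s e))"
    then show "\<exists>y. cval (cC1 i C) (e(i := y))" by blast
  next
    assume "\<exists>y. cval (cC1 i C) (e(i := y))"
    then obtain y where y: "cval (cC1 i C) (e(i := y))" by blast
    obtain b j where b: "b \<in> set (cC1 i C)" "akind b = 0" "acoef i b = 1" and j: "1 \<le> j" "j \<le> nat (cdelta i C)"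
      and w: "cval (cC1 i C) (e(i := - lval (lzero i (aterm b)) e + int j))"
      using cooper[OF _ b0_C1 b0_props cdelta_pos _ y] coef_C1 cdelta_dvd by blast
    have bLB: "b \<in> set (cLB i C)" using b unfolding cLB_def by simp
    have "ladd (lscale (-1) (lzero i (aterm b))) (lconst (int j)) \<in> set (cands i C)"
      by (rule mem_cands[OF bLB j])
    then show "\<exists>s\<in>set (cands i C). cval (cC1 i C) (e(i := lval s e))"
      using w lval_cand by (intro bexI) auto
  qed
  also have "\<dots> = (\<exists>x\<ge>0. cval C (e(i := x)))" by (simp add: cC0_correct cC1_correct)
  finally show ?thesis .
qed

lemma elimD_correct: "dval (elimD i D) e = (\<exists>x\<ge>0. dval D (e(i := x)))"
proof -
  have "dval (elimD i D) e = (\<exists>C\<in>set D. dval (elim i C) e)"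
    by (auto simp: elimD_def dval_def)
  also have "\<dots> = (\<exists>C\<in>set D. \<exists>x\<ge>0. cval C (e(i := x)))" by (simp add: elim_correct)
  also have "\<dots> = (\<exists>x\<ge>0. dval D (e(i := x)))" by (auto simp: dval_def)
  finally show ?thesis .
qed


subsection \<open>Translation of formulas\<close>

primrec trt :: "tm \<Rightarrow> lin" where
  "trt (Var i) = lvar i"
| "trt Zer = lconst 0"
| "trt One = lconst 1"
| "trt (Plus s t) = ladd (trt s) (trt t)"

lemma lval_trt[simp]: "lval (trt t) (\<lambda>j. int (e j)) = int (tm_val e t)"
  by (induction t) auto

type_synonym uparams = "int list \<times> int list \<times> int"

definition eqD :: "lin \<Rightarrow> atom list list" where
  "eqD l = [[(0, 0, ladd l (lconst 1)), (0, 0, ladd (lconst 1) (lscale (-1) l))]]"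

lemma dval_eqD[simp]: "dval (eqD l) e = (lval l e = 0)"
  by (auto simp: eqD_def aval_def)

definition lsubc :: "lin \<Rightarrow> int \<Rightarrow> lin" where "lsubc l u = ladd l (lconst (- u))"

lemma lval_lsubc[simp]: "lval (lsubc l u) e = lval l e - u"
  by (simp add: lsubc_def)

definition uD :: "uparams \<Rightarrow> lin \<Rightarrow> atom list list" where
  "uD P l = map (\<lambda>u. [(0, 0, ladd (lsubc l u) (lconst 1)), (0, 0, ladd (lconst 1) (lscale (-1) (lsubc l u)))]) (fst P)
     @ map (\<lambda>u. [(0, 0, ladd (lsubc l u) (lconst 1)), (1, snd (snd P), lsubc l u)]) (fst (snd P))"

lemma dval_uD: "dval (uD P l) e = ((\<exists>u\<in>set (fst P). lval l e = u) \<or>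
     (\<exists>u\<in>set (fst (snd P)). u \<le> lval l e \<and> max 1 \<bar>snd (snd P)\<bar> dvd lval l e - u))"
proof -
  have dapp: "dval (xs @ ys) e = (dval xs e \<or> dval ys e)" for xs ys by (auto simp: dval_def)
  have dmap: "dval (map F us) e = (\<exists>u\<in>set us. cval (F u) e)" for F and us :: "int list"
    by (auto simp: dval_def)
  have 1: "cval [(0, 0, ladd (lsubc l u) (lconst 1)), (0, 0, ladd (lconst 1) (lscale (-1) (lsubc l u)))] e
      = (lval l e = u)" for u by (simp add: aval_def) arith
  have 2: "cval [(0, 0, ladd (lsubc l u) (lconst 1)), (1, snd (snd P), lsubc l u)] e
      = (u \<le> lval l e \<and> max 1 \<bar>snd (snd P)\<bar> dvd lval l e - u)" for u by (simp add: aval_def dm_def)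
  show ?thesis unfolding uD_def dapp dmap 1 2 by blast
qed

primrec trf :: "uparams \<Rightarrow> fm \<Rightarrow> atom list list" where
  "trf P (Eq s t) = eqD (ladd (trt s) (lscale (-1) (trt t)))"
| "trf P (Ulam t) = uD P (trt t)"
| "trf P (Neg \<phi>) = dneg (trf P \<phi>)"
| "trf P (And \<phi> \<psi>) = dand (trf P \<phi>) (trf P \<psi>)"
| "trf P (Ex i \<phi>) = elimD i (trf P \<phi>)"

definition urep :: "uparams \<Rightarrow> nat set \<Rightarrow> bool" where
  "urep P U \<longleftrightarrow> (\<forall>n. n \<in> U \<longleftrightarrow> ((\<exists>u\<in>set (fst P). int n = u) \<or>
      (\<exists>u\<in>set (fst (snd P)). u \<le> int n \<and> max 1 \<bar>snd (snd P)\<bar> dvd int n - u)))"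

lemma trf_correct:
  assumes "urep P U"
  shows "dval (trf P \<phi>) (\<lambda>j. int (e j)) = sat U e \<phi>"
proof (induction \<phi> arbitrary: e)
  case (Eq s t) then show ?case by simp
next
  case (Ulam t) then show ?case using assms by (simp add: dval_uD urep_def)
next
  case (Neg \<phi>) then show ?case by simp
next
  case (And \<phi> \<psi>) then show ?case by simp
next
  case (Ex i \<phi>)
  have upd: "(\<lambda>j. int ((e(i := n)) j)) = (\<lambda>j. int (e j))(i := int n)" for n by auto
  have "dval (trf P (Ex i \<phi>)) (\<lambda>j. int (e j)) = (\<exists>x\<ge>0. dval (trf P \<phi>) ((\<lambda>j. int (e j))(i := x)))"
    by (simp add: elimD_correct)
  also have "\<dots> = (\<exists>n. dval (trf P \<phi>) ((\<lambda>j. int (e j))(i := int n)))"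
    by (metis nonneg_int_cases of_nat_0_le_iff)
  also have "\<dots> = (\<exists>n. sat U (e(i := n)) \<phi>)" by (simp only: upd[symmetric] Ex.IH)
  finally show ?case by simp
qed


lemma cp_prod_decode[cp_intros]: "cp f \<Longrightarrow> cp (\<lambda>x. prod_decode (f x))"
  apply (erule cpE)
  subgoal for gf by (rule cpI[of gf]) (auto simp: enc_prod_def)
  done

lemma cp_list_decode[cp_intros]: "cp f \<Longrightarrow> cp (\<lambda>x. list_decode (f x))"
proof -
  have e: "enc (list_decode n) = n" for n by (simp add: enc_list_def enc_nat_def[abs_def])
  show "cp f \<Longrightarrow> cp (\<lambda>x. list_decode (f x))"
    apply (erule cpE)
    subgoal for gf by (rule cpI[of gf]) (auto simp: e)
    done
qed

definition covtab :: "('e \<Rightarrow> nat \<Rightarrow> 'r list \<Rightarrow> 'r) \<Rightarrow> 'e \<Rightarrow> nat \<Rightarrow> 'r list" where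
  "covtab H e n = foldl (\<lambda>tbl k. tbl @ [H e k tbl]) [] [0..<n]"
definition cov :: "('e \<Rightarrow> nat \<Rightarrow> 'r list \<Rightarrow> 'r) \<Rightarrow> 'e \<Rightarrow> nat \<Rightarrow> 'r" where
  "cov H e n = H e n (covtab H e n)"

lemma covtab_Suc: "covtab H e (Suc n) = covtab H e n @ [cov H e n]"
  by (simp add: covtab_def cov_def)

lemma covtab_len[simp]: "length (covtab H e n) = n"
  by (induction n) (auto simp: covtab_Suc, simp add: covtab_def)

lemma covtab_nth: "k < n \<Longrightarrow> covtab H e n ! k = cov H e k"
proof (induction n)
  case (Suc n) then show ?case by (cases "k = n") (auto simp: covtab_Suc nth_append)
qed simp

lemma covtab_nthd: "k < n \<Longrightarrow> nthd d (covtab H e n) k = cov H e k"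
  by (simp add: nthd_eq covtab_nth)

lemma cp_cov:
  fixes H :: "'e::encode \<Rightarrow> nat \<Rightarrow> 'r::encode list \<Rightarrow> 'r"
  assumes H: "cp (\<lambda>p. H (fst p) (fst (snd p)) (snd (snd p)))"
  shows "cp (\<lambda>p. cov H (fst p) (snd p))"
  unfolding cov_def covtab_def by (intro cp_intros cp_app3[OF H] cp_upt0)

lemma pe_less: "0 < k \<Longrightarrow> x < prod_encode (k, x)"
  using triangle_ge[of "k + x"] by (simp add: prod_encode_def)
lemma pe_le1: "a \<le> prod_encode (a, b)" by (rule le_prod_encode_1)
lemma pe_le2: "b \<le> prod_encode (a, b)" by (rule le_prod_encode_2)

lemma cp_coeff[cp_intros]: "cp f \<Longrightarrow> cp g \<Longrightarrow> cp (\<lambda>x. coeff (f x) (g x))"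
  unfolding coeff_def by (intro cp_intros)

lemma cp_ladd[cp_intros]: "cp f \<Longrightarrow> cp g \<Longrightarrow> cp (\<lambda>x. ladd (f x) (g x))"
proof -
  assume f: "cp f" and g: "cp g"
  show ?thesis unfolding ladd_def by (intro cp_intros cp_upt0 cp_app1[OF f] cp_app1[OF g])
qed

lemma cp_lscale[cp_intros]: "cp f \<Longrightarrow> cp g \<Longrightarrow> cp (\<lambda>x. lscale (f x) (g x))"
proof -
  assume f: "cp f" and g: "cp g"
  show ?thesis unfolding lscale_def by (intro cp_intros cp_app1[OF f] cp_app1[OF g])
qed

lemma cp_lconst[cp_intros]: "cp f \<Longrightarrow> cp (\<lambda>x. lconst (f x))"
  unfolding lconst_def by (intro cp_intros)

lemma cp_lvar[cp_intros]: "cp f \<Longrightarrow> cp (\<lambda>x. lvar (f x))"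
  unfolding lvar_def by (intro cp_intros)

lemma cp_lzero[cp_intros]: "cp f \<Longrightarrow> cp g \<Longrightarrow> cp (\<lambda>x. lzero (f x) (g x))"
proof -
  assume f: "cp f" and g: "cp g"
  show ?thesis unfolding lzero_def by (intro cp_intros cp_upt0 cp_app1[OF f] cp_app1[OF g])
qed

lemma cp_lsubst[cp_intros]: "cp f \<Longrightarrow> cp g \<Longrightarrow> cp h \<Longrightarrow> cp (\<lambda>x. lsubst (f x) (g x) (h x))"
  unfolding lsubst_def by (intro cp_intros)

lemma cp_lsubc[cp_intros]: "cp f \<Longrightarrow> cp g \<Longrightarrow> cp (\<lambda>x. lsubc (f x) (g x))"
  unfolding lsubc_def by (intro cp_intros)

lemma cp_akind[cp_intros]: "cp f \<Longrightarrow> cp (\<lambda>x. akind (f x))"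
  unfolding akind_def by (intro cp_intros)
lemma cp_amod[cp_intros]: "cp f \<Longrightarrow> cp (\<lambda>x. amod (f x))"
  unfolding amod_def by (intro cp_intros)
lemma cp_aterm[cp_intros]: "cp f \<Longrightarrow> cp (\<lambda>x. aterm (f x))"
  unfolding aterm_def by (intro cp_intros)
lemma cp_dm[cp_intros]: "cp f \<Longrightarrow> cp (\<lambda>x. dm (f x))"
  unfolding dm_def max_def by (intro cp_intros)
lemma cp_acoef[cp_intros]: "cp f \<Longrightarrow> cp g \<Longrightarrow> cp (\<lambda>x. acoef (f x) (g x))"
  unfolding acoef_def by (intro cp_intros)

lemma cp_negatom[cp_intros]: "cp f \<Longrightarrow> cp (\<lambda>x. negatom (f x))"
  unfolding negatom_def by (intro cp_intros)

lemma cp_dand[cp_intros]: "cp f \<Longrightarrow> cp g \<Longrightarrow> cp (\<lambda>x. dand (f x) (g x))"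
proof -
  assume f: "cp f" and g: "cp g"
  show ?thesis unfolding dand_def by (intro cp_intros cp_app1[OF f] cp_app1[OF g])
qed

lemma cp_negC[cp_intros]: "cp f \<Longrightarrow> cp (\<lambda>x. negC (f x))"
  unfolding negC_def by (intro cp_intros)

lemma cp_dneg[cp_intros]: "cp f \<Longrightarrow> cp (\<lambda>x. dneg (f x))"
  unfolding dneg_def by (intro cp_intros)

lemma cp_sgn[cp_intros]: "cp f \<Longrightarrow> cp (\<lambda>x. sgn (f x :: int))"
proof -
  assume f: "cp f"
  have "cp (\<lambda>x. if f x = 0 then 0 else if 0 < f x then 1 else (-1::int))" by (intro cp_intros f)
  then show ?thesis by (rule cp_cong) (simp add: sgn_if)
qed

definition scale_atom' :: "nat \<Rightarrow> int \<Rightarrow> atom \<Rightarrow> atom" where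
  "scale_atom' i L a = (if acoef i a = 0 then a else
     (akind a, int (nat L div nat \<bar>acoef i a\<bar>) * amod a,
      ladd (lzero i (lscale (int (nat L div nat \<bar>acoef i a\<bar>)) (aterm a))) (lscale (sgn (acoef i a)) (lvar i))))"

lemma scale_atom'_eq: "0 < L \<Longrightarrow> scale_atom' i L a = scale_atom i L a"
  by (simp add: scale_atom'_def scale_atom_def zdiv_int)

lemma cp_scale_atom'[cp_intros]: "cp f \<Longrightarrow> cp g \<Longrightarrow> cp h \<Longrightarrow> cp (\<lambda>x. scale_atom' (f x) (g x) (h x))"
  unfolding scale_atom'_def by (intro cp_intros)

lemma cp_cC0[cp_intros]: "cp f \<Longrightarrow> cp g \<Longrightarrow> cp (\<lambda>x. cC0 (f x) (g x))"
  unfolding cC0_def by (intro cp_intros)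

lemma cp_cL[cp_intros]: "cp f \<Longrightarrow> cp g \<Longrightarrow> cp (\<lambda>x. cL (f x) (g x))"
proof -
  assume f: "cp f" and g: "cp g"
  show ?thesis unfolding cL_def by (intro cp_intros cp_app1[OF f] cp_app1[OF g])
qed

lemma cC1_alt: "cC1 i C = (1, cL i C, lvar i) # map (scale_atom' i (cL i C)) (cC0 i C)"
  by (simp add: cC1_def scale_atom'_eq[OF cL_pos])

lemma cp_cC1[cp_intros]: "cp f \<Longrightarrow> cp g \<Longrightarrow> cp (\<lambda>x. cC1 (f x) (g x))"
proof -
  assume f: "cp f" and g: "cp g"
  show ?thesis unfolding cC1_alt by (intro cp_intros cp_app1[OF f] cp_app1[OF g])
qed

lemma cp_cdelta[cp_intros]: "cp f \<Longrightarrow> cp g \<Longrightarrow> cp (\<lambda>x. cdelta (f x) (g x))"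
  unfolding cdelta_def by (intro cp_intros)

lemma cp_cLB[cp_intros]: "cp f \<Longrightarrow> cp g \<Longrightarrow> cp (\<lambda>x. cLB (f x) (g x))"
proof -
  assume f: "cp f" and g: "cp g"
  show ?thesis unfolding cLB_def by (intro cp_intros cp_app1[OF f] cp_app1[OF g])
qed

lemma cp_cands[cp_intros]: "cp f \<Longrightarrow> cp g \<Longrightarrow> cp (\<lambda>x. cands (f x) (g x))"
proof -
  assume f: "cp f" and g: "cp g"
  show ?thesis unfolding cands_def by (intro cp_intros cp_app1[OF f] cp_app1[OF g])
qed

lemma cp_asubst[cp_intros]: "cp f \<Longrightarrow> cp g \<Longrightarrow> cp h \<Longrightarrow> cp (\<lambda>x. asubst (f x) (g x) (h x))"
  unfolding asubst_def by (intro cp_intros)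

lemma cp_elim[cp_intros]: "cp f \<Longrightarrow> cp g \<Longrightarrow> cp (\<lambda>x. elim (f x) (g x))"
proof -
  assume f: "cp f" and g: "cp g"
  show ?thesis unfolding elim_def by (intro cp_intros cp_app1[OF f] cp_app1[OF g])
qed

lemma cp_elimD[cp_intros]: "cp f \<Longrightarrow> cp g \<Longrightarrow> cp (\<lambda>x. elimD (f x) (g x))"
proof -
  assume f: "cp f" and g: "cp g"
  show ?thesis unfolding elimD_def by (intro cp_intros cp_app1[OF f] cp_app1[OF g])
qed

lemma cp_eqD[cp_intros]: "cp f \<Longrightarrow> cp (\<lambda>x. eqD (f x))"
  unfolding eqD_def by (intro cp_intros)

lemma cp_uD[cp_intros]: "cp f \<Longrightarrow> cp g \<Longrightarrow> cp (\<lambda>x. uD (f x) (g x))"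
proof -
  assume f: "cp f" and g: "cp g"
  show ?thesis unfolding uD_def by (intro cp_intros cp_app1[OF f] cp_app1[OF g])
qed


definition HT :: "nat \<Rightarrow> nat \<Rightarrow> lin list \<Rightarrow> lin" where
  "HT e n tbl = (if fst (prod_decode n) = 0 then lvar (snd (prod_decode n))
     else if fst (prod_decode n) = 1 then lconst 0
     else if fst (prod_decode n) = 2 then lconst 1
     else ladd (nthd ([], 0) tbl (fst (prod_decode (snd (prod_decode n)))))
               (nthd ([], 0) tbl (snd (prod_decode (snd (prod_decode n))))))"

definition tmN :: "nat \<Rightarrow> lin" where "tmN n = cov HT 0 n"

lemma tmN_correct: "tmN (tm_code t) = trt t"
proof (induction t)
  case (Var i) then show ?case by (simp add: tmN_def cov_def HT_def)
next
  case Zer then show ?case by (simp add: tmN_def cov_def HT_def)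
next
  case One then show ?case by (simp add: tmN_def cov_def HT_def)
next
  case (Plus s t)
  define n where "n = tm_code (Plus s t)"
  have n: "n = prod_encode (3, prod_encode (tm_code s, tm_code t))" by (simp add: n_def)
  have lt: "tm_code s < n" "tm_code t < n"
    using pe_less[of 3 "prod_encode (tm_code s, tm_code t)"] pe_le1[where a="tm_code s" and b="tm_code t"]
      pe_le2[where a="tm_code s" and b="tm_code t"] unfolding n by linarith+
  have "tmN n = HT 0 n (covtab HT 0 n)" by (simp add: tmN_def cov_def)
  also have "\<dots> = ladd (cov HT 0 (tm_code s)) (cov HT 0 (tm_code t))"
    by (simp add: HT_def n covtab_nthd[OF lt(1)[unfolded n]] covtab_nthd[OF lt(2)[unfolded n]])
  also have "\<dots> = trt (Plus s t)" using Plus by (simp add: tmN_def)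
  finally show ?case by (simp add: n_def)
qed

lemma cp_tmN[cp_intros]: "cp f \<Longrightarrow> cp (\<lambda>x. tmN (f x))"
proof -
  have "cp (\<lambda>p. cov HT (fst p) (snd p))"
    by (rule cp_cov) (unfold HT_def, intro cp_intros)
  then have "cp (\<lambda>n. tmN n)"
    by (rule cp_cong[OF cp_comp[OF _ cp_pair[OF cp_const[of 0] cp_id]]]) (simp add: tmN_def)
  then show "cp f \<Longrightarrow> cp (\<lambda>x. tmN (f x))" by (rule cp_app1)
qed

definition HF :: "uparams \<Rightarrow> nat \<Rightarrow> atom list list list \<Rightarrow> atom list list" where
  "HF P n tbl = (if fst (prod_decode n) = 0 then
        eqD (ladd (tmN (fst (prod_decode (snd (prod_decode n)))))
                  (lscale (-1) (tmN (snd (prod_decode (snd (prod_decode n)))))))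
     else if fst (prod_decode n) = 1 then uD P (tmN (snd (prod_decode n)))
     else if fst (prod_decode n) = 2 then dneg (nthd [] tbl (snd (prod_decode n)))
     else if fst (prod_decode n) = 3 then
       dand (nthd [] tbl (fst (prod_decode (snd (prod_decode n)))))
            (nthd [] tbl (snd (prod_decode (snd (prod_decode n)))))
     else elimD (fst (prod_decode (snd (prod_decode n))))
            (nthd [] tbl (snd (prod_decode (snd (prod_decode n))))))"

definition fmN :: "uparams \<Rightarrow> nat \<Rightarrow> atom list list" where "fmN P n = cov HF P n"

lemma fmN_correct: "fmN P (fm_code \<phi>) = trf P \<phi>"
proof (induction \<phi>)
  case (Eq s t) then show ?case by (simp add: fmN_def cov_def HF_def tmN_correct)
next
  case (Ulam t) then show ?case by (simp add: fmN_def cov_def HF_def tmN_correct)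
next
  case (Neg \<phi>)
  define n where "n = fm_code (Neg \<phi>)"
  have n: "n = prod_encode (2, fm_code \<phi>)" by (simp add: n_def)
  have lt: "fm_code \<phi> < n" using pe_less[of 2 "fm_code \<phi>"] unfolding n by simp
  have "fmN P n = HF P n (covtab HF P n)" by (simp add: fmN_def cov_def)
  also have "\<dots> = dneg (cov HF P (fm_code \<phi>))"
    by (simp add: HF_def n covtab_nthd[OF lt[unfolded n]])
  also have "\<dots> = trf P (Neg \<phi>)" using Neg by (simp add: fmN_def)
  finally show ?case by (simp add: n_def)
next
  case (And \<phi> \<psi>)
  define n where "n = fm_code (And \<phi> \<psi>)"
  have n: "n = prod_encode (3, prod_encode (fm_code \<phi>, fm_code \<psi>))" by (simp add: n_def)
  have lt: "fm_code \<phi> < n" "fm_code \<psi> < n"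
    using pe_less[of 3 "prod_encode (fm_code \<phi>, fm_code \<psi>)"] pe_le1[where a="fm_code \<phi>" and b="fm_code \<psi>"]
      pe_le2[where a="fm_code \<phi>" and b="fm_code \<psi>"] unfolding n by linarith+
  have "fmN P n = HF P n (covtab HF P n)" by (simp add: fmN_def cov_def)
  also have "\<dots> = dand (cov HF P (fm_code \<phi>)) (cov HF P (fm_code \<psi>))"
    by (simp add: HF_def n covtab_nthd[OF lt(1)[unfolded n]] covtab_nthd[OF lt(2)[unfolded n]])
  also have "\<dots> = trf P (And \<phi> \<psi>)" using And by (simp add: fmN_def)
  finally show ?case by (simp add: n_def)
next
  case (Ex i \<phi>)
  define n where "n = fm_code (Ex i \<phi>)"
  have n: "n = prod_encode (4, prod_encode (i, fm_code \<phi>))" by (simp add: n_def)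
  have lt: "fm_code \<phi> < n"
    using pe_less[of 4 "prod_encode (i, fm_code \<phi>)"] pe_le2[where a=i and b="fm_code \<phi>"] unfolding n by linarith
  have "fmN P n = HF P n (covtab HF P n)" by (simp add: fmN_def cov_def)
  also have "\<dots> = elimD i (cov HF P (fm_code \<phi>))"
    by (simp add: HF_def n covtab_nthd[OF lt[unfolded n]])
  also have "\<dots> = trf P (Ex i \<phi>)" using Ex by (simp add: fmN_def)
  finally show ?case by (simp add: n_def)
qed

lemma cp_fmN[cp_intros]: "cp f \<Longrightarrow> cp g \<Longrightarrow> cp (\<lambda>x. fmN (f x) (g x))"
proof -
  have "cp (\<lambda>p. cov HF (fst p) (snd p))"
    by (rule cp_cov) (unfold HF_def, intro cp_intros)
  then have "cp (\<lambda>p. fmN (fst p) (snd p))" by (rule cp_cong) (simp add: fmN_def)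
  then show "cp f \<Longrightarrow> cp g \<Longrightarrow> cp (\<lambda>x. fmN (f x) (g x))" by (rule cp_app2)
qed

definition lvalL :: "lin \<Rightarrow> nat list \<Rightarrow> int" where
  "lvalL l xs = foldl (\<lambda>acc i. acc + coeff (fst l) i * int (nthd 0 xs i)) (snd l) [0..<length (fst l)]"

lemma foldl_sum_upt: "foldl (\<lambda>acc i. acc + f i) a [0..<n] = a + (\<Sum>i<n. f i)"
  for f :: "nat \<Rightarrow> int"
  by (induction n arbitrary: a) auto

lemma tuple_env_nthd: "tuple_env xs i = nthd 0 xs i"
  by (simp add: tuple_env_def nthd_eq)

lemma lvalL_eq: "lvalL l xs = lval l (\<lambda>j. int (tuple_env xs j))"
  by (simp add: lvalL_def lval_def foldl_sum_upt tuple_env_nthd)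

definition avalL :: "atom \<Rightarrow> nat list \<Rightarrow> bool" where
  "avalL a xs = (if akind a = 0 then 0 < lvalL (aterm a) xs
               else if akind a = 1 then dm a dvd lvalL (aterm a) xs
               else \<not> dm a dvd lvalL (aterm a) xs)"

definition dvalL :: "atom list list \<Rightarrow> nat list \<Rightarrow> bool" where
  "dvalL D xs = (\<exists>C\<in>set D. \<forall>a\<in>set C. avalL a xs)"

lemma dvalL_eq: "dvalL D xs = dval D (\<lambda>j. int (tuple_env xs j))"
  by (simp add: dvalL_def dval_def cval_def avalL_def aval_def lvalL_eq)

lemma cp_lvalL[cp_intros]: "cp f \<Longrightarrow> cp g \<Longrightarrow> cp (\<lambda>x. lvalL (f x) (g x))"
proof -
  assume f: "cp f" and g: "cp g"
  show ?thesis unfolding lvalL_def by (intro cp_intros cp_upt0 cp_app1[OF f] cp_app1[OF g])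
qed

lemma cp_avalL[cp_intros]: "cp f \<Longrightarrow> cp g \<Longrightarrow> cp (\<lambda>x. avalL (f x) (g x))"
  unfolding avalL_def by (intro cp_intros)

lemma cp_dvalL[cp_intros]: "cp f \<Longrightarrow> cp g \<Longrightarrow> cp (\<lambda>x. dvalL (f x) (g x))"
proof -
  assume f: "cp f" and g: "cp g"
  show ?thesis unfolding dvalL_def by (intro cp_intros cp_app1[OF f] cp_app1[OF g])
qed

theorem decide_correct:
  assumes "urep P U"
  shows "dvalL (fmN P (fm_code \<phi>)) xs = sat U (tuple_env xs) \<phi>"
  using trf_correct[OF assms, of \<phi> "tuple_env xs"] by (simp add: fmN_correct dvalL_eq)


section \<open>Ulam sequences: basic facts\<close>

definition unext :: "nat list \<Rightarrow> nat" where
  "unext us = (LEAST n. n > last us \<and> card {(i, j). i < j \<and> j < length us \<and> us ! i + us ! j = n} = 1)"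

lemma up_SSS: "ulam_prefix a b (Suc (Suc (Suc k))) = ulam_prefix a b (Suc (Suc k)) @ [unext (ulam_prefix a b (Suc (Suc k)))]"
  by (simp add: Let_def unext_def)

lemma up_len[simp]: "length (ulam_prefix a b k) = k"
  by (induction a b k rule: ulam_prefix.induct) (simp_all add: Let_def)

lemma up_snoc: "\<exists>x. ulam_prefix a b (Suc k) = ulam_prefix a b k @ [x]"
proof (cases k)
  case 0 then show ?thesis by simp
next
  case (Suc k')
  then show ?thesis
  proof (cases k')
    case 0 then show ?thesis using Suc by simp
  next
    case (Suc k'') then show ?thesis using \<open>k = Suc k'\<close> up_SSS by simp
  qed
qed

lemma up_nth: "i < k \<Longrightarrow> ulam_prefix a b k ! i = ulam a b i"
proof (induction k)
  case (Suc k)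
  obtain x where x: "ulam_prefix a b (Suc k) = ulam_prefix a b k @ [x]" using up_snoc by blast
  show ?case
  proof (cases "i < k")
    case True then show ?thesis using Suc x by (simp add: nth_append)
  next
    case False then have "i = k" using Suc by simp
    then show ?thesis by (simp add: ulam_def)
  qed
qed simp

lemma sorted_le_last: "sorted_wrt (<) xs \<Longrightarrow> y \<in> set xs \<Longrightarrow> y \<le> last (xs :: nat list)"
proof -
  assume s: "sorted_wrt (<) xs" and y: "y \<in> set xs"
  then obtain i where i: "i < length xs" "y = xs ! i" by (auto simp: in_set_conv_nth)
  have "xs \<noteq> []" using i by auto
  then have l: "last xs = xs ! (length xs - 1)" by (simp add: last_conv_nth)
  show ?thesis
  proof (cases "i = length xs - 1")
    case True then show ?thesis using i l by simp
  next
    case False then show ?thesis using i l sorted_wrt_nth_less[OF s, of i "length xs - 1"] by fastforce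
  qed
qed

definition upairs :: "nat \<Rightarrow> (nat \<times> nat) list" where
  "upairs m = concat (map (\<lambda>j. map (\<lambda>i. (i, j)) [0..<j]) [0..<m])"

lemma set_upairs: "set (upairs m) = {(i, j). i < j \<and> j < m}"
  by (auto simp: upairs_def)

lemma distinct_upairs: "distinct (upairs m)"
  unfolding upairs_def
  by (induction m) (auto simp: distinct_map inj_on_def)

definition ucnt :: "nat list \<Rightarrow> nat \<Rightarrow> nat" where
  "ucnt us n = length (filter (\<lambda>p. nthd 0 us (fst p) + nthd 0 us (snd p) = n) (upairs (length us)))"

lemma ucnt_card: "ucnt us n = card {(i, j). i < j \<and> j < length us \<and> us ! i + us ! j = n}"
proof -
  have eq: "{(i, j). i < j \<and> j < length us \<and> us ! i + us ! j = n} =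
      set (filter (\<lambda>p. nthd 0 us (fst p) + nthd 0 us (snd p) = n) (upairs (length us)))"
    by (auto simp: set_upairs nthd_eq)
  have dist: "distinct (filter (\<lambda>p. nthd 0 us (fst p) + nthd 0 us (snd p) = n) (upairs (length us)))"
    by (simp add: distinct_upairs)
  show ?thesis unfolding ucnt_def eq by (rule distinct_card[OF dist, symmetric])
qed

lemma witness_unique:
  fixes us :: "nat list"
  assumes s: "sorted_wrt (<) us" and l: "2 \<le> length us"
  shows "card {(i, j). i < j \<and> j < length us \<and> us ! i + us ! j = us ! (length us - 2) + us ! (length us - 1)} = 1"
proof -
  have "{(i, j). i < j \<and> j < length us \<and> us ! i + us ! j = us ! (length us - 2) + us ! (length us - 1)} = {(length us - 2, length us - 1)}"
  proof (safe)
    fix i j assume ij: "i < j" "j < length us" "us ! i + us ! j = us ! (length us - 2) + us ! (length us - 1)"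
    have jL: "j = length us - 1"
    proof (rule ccontr)
      assume "j \<noteq> length us - 1"
      then have "j \<le> length us - 2" using ij by linarith
      have l2: "length us - 2 < length us" using l by linarith
      have "us ! j \<le> us ! (length us - 2)"
      proof (cases "j = length us - 2")
        case True then show ?thesis by simp
      next
        case False then have "j < length us - 2" using \<open>j \<le> length us - 2\<close> by simp
        then show ?thesis using sorted_wrt_nth_less[OF s, of j "length us - 2"] l2 by simp
      qed
      moreover have "us ! i < us ! j" using sorted_wrt_nth_less[OF s, of i j] ij by simp
      moreover have "us ! (length us - 2) < us ! (length us - 1)" using sorted_wrt_nth_less[OF s, of "length us - 2" "length us - 1"] l
        by simp
      ultimately show False using ij by linarith
    qed
    then have "us ! i = us ! (length us - 2)" using ij by simp
    moreover have "i \<le> length us - 2" using ij jL by simp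
    ultimately show "i = length us - 2"
    proof (cases "i = length us - 2")
      case False
      assume "us ! i = us ! (length us - 2)" "i \<le> length us - 2"
      then have "i < length us - 2" using False by simp
      moreover have "length us - 2 < length us" using l by linarith
      ultimately have "us ! i < us ! (length us - 2)" using sorted_wrt_nth_less[OF s] by blast
      then show ?thesis using \<open>us ! i = us ! (length us - 2)\<close> by simp
    qed
    show "j = length us - 1" by (rule jL)
  next
    show "length us - 2 < length us - 1" using l by simp
    show "length us - 1 < length us" using l by simp
  qed
  then show ?thesis by simp
qed

lemma unext_props:
  fixes us :: "nat list"
  assumes s: "sorted_wrt (<) us" and l: "2 \<le> length us" and pos: "\<forall>x\<in>set us. 0 < x"
  shows "last us < unext us" "card {(i, j). i < j \<and> j < length us \<and> us ! i + us ! j = unext us} = 1"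
    "unext us \<le> us ! (length us - 2) + us ! (length us - 1)"
proof -
  define w where "w = us ! (length us - 2) + us ! (length us - 1)"
  have "us \<noteq> []" using l by auto
  then have "last us = us ! (length us - 1)" by (simp add: last_conv_nth)
  moreover have "0 < us ! (length us - 2)" using pos l by auto
  ultimately have lw: "last us < w" unfolding w_def by simp
  have P: "w > last us \<and> card {(i, j). i < j \<and> j < length us \<and> us ! i + us ! j = w} = 1"
    using lw witness_unique[OF s l] unfolding w_def by simp
  show "last us < unext us" "card {(i, j). i < j \<and> j < length us \<and> us ! i + us ! j = unext us} = 1"
    using LeastI[of "\<lambda>n. n > last us \<and> card {(i, j). i < j \<and> j < length us \<and> us ! i + us ! j = n} = 1" w, OF P]
    unfolding unext_def by auto
  show "unext us \<le> us ! (length us - 2) + us ! (length us - 1)"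
    using Least_le[of "\<lambda>n. n > last us \<and> card {(i, j). i < j \<and> j < length us \<and> us ! i + us ! j = n} = 1" w, OF P]
    unfolding unext_def w_def by simp
qed

lemma up_sorted: assumes "0 < a" "a < b"
  shows "sorted_wrt (<) (ulam_prefix a b k) \<and> (\<forall>x\<in>set (ulam_prefix a b k). 0 < x)"
proof (induction k rule: nat_less_induct)
  case (1 k)
  show ?case
  proof (cases k)
    case 0 then show ?thesis by simp
  next
    case (Suc k1)
    show ?thesis
    proof (cases k1)
      case 0 then show ?thesis using Suc assms by simp
    next
      case (Suc k2)
      show ?thesis
      proof (cases k2)
        case 0 then show ?thesis using Suc \<open>k = Suc k1\<close> assms by simp
      next
        case (Suc k3)
        define us where "us = ulam_prefix a b (Suc (Suc k3))"
        have k: "k = Suc (Suc (Suc k3))" using \<open>k = Suc k1\<close> \<open>k1 = Suc k2\<close> Suc by simp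
        have IH: "sorted_wrt (<) us \<and> (\<forall>x\<in>set us. 0 < x)" using "1"[rule_format, of "Suc (Suc k3)"] k unfolding us_def by simp
        have l: "2 \<le> length us" by (simp add: us_def)
        have nx: "last us < unext us" using unext_props(1)[OF _ l] IH by blast
        have "\<forall>y\<in>set us. y < unext us" using sorted_le_last[of us] IH nx by fastforce
        then show ?thesis unfolding k up_SSS us_def[symmetric] using IH nx
          by (auto simp: sorted_wrt_append)
      qed
    qed
  qed
qed

lemma ulam_mono: assumes "0 < a" "a < b" shows "ulam a b k < ulam a b (Suc k)"
proof -
  have s: "sorted_wrt (<) (ulam_prefix a b (Suc (Suc k)))" using up_sorted[OF assms] by blast
  have "ulam_prefix a b (Suc (Suc k)) ! k < ulam_prefix a b (Suc (Suc k)) ! Suc k"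
    by (rule sorted_wrt_nth_less[OF s]) auto
  then show ?thesis by (simp add: up_nth)
qed

lemma ulam_smono: assumes "0 < a" "a < b" shows "strict_mono (ulam a b)"
  using ulam_mono[OF assms] by (simp add: strict_mono_Suc_iff)


lemma filter_upt_least:
  assumes "lo \<le> w" "w < hi" "Q w"
  shows "nthd 0 (filter Q [lo..<hi]) 0 = (LEAST n. lo \<le> n \<and> Q n)"
proof -
  define m where "m = (LEAST n. lo \<le> n \<and> Q n)"
  have m: "lo \<le> m" "Q m" using LeastI[of "\<lambda>n. lo \<le> n \<and> Q n" w] assms unfolding m_def by auto
  have mw: "m \<le> w" using Least_le[of "\<lambda>n. lo \<le> n \<and> Q n" w] assms unfolding m_def by auto
  have below: "\<not> Q n" if "lo \<le> n" "n < m" for n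
    using not_less_Least[of n "\<lambda>n. lo \<le> n \<and> Q n"] that unfolding m_def by auto
  have "[lo..<hi] = [lo..<m] @ [m..<hi]"
    using upt_add_eq_append[of lo m "hi - m"] m mw assms by simp
  moreover have "[m..<hi] = m # [Suc m..<hi]" using mw assms by (simp add: upt_conv_Cons)
  moreover have "filter Q [lo..<m] = []" using below by (auto simp: filter_empty_conv)
  ultimately have "filter Q [lo..<hi] = m # filter Q [Suc m..<hi]" using m by simp
  then show ?thesis by (simp add: nthd_eq m_def)
qed

definition unextc :: "nat list \<Rightarrow> nat" where
  "unextc us = nthd 0 (filter (\<lambda>n. ucnt us n = 1)
      [Suc (nthd 0 us (length us - 1))..<nthd 0 us (length us - 2) + nthd 0 us (length us - 1) + 1]) 0"

lemma unextc_eq: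
  fixes us :: "nat list"
  assumes s: "sorted_wrt (<) us" and l: "2 \<le> length us" and pos: "\<forall>x\<in>set us. 0 < x"
  shows "unextc us = unext us"
proof -
  have ne: "us \<noteq> []" using l by auto
  have lst: "nthd 0 us (length us - 1) = last us" using ne by (simp add: nthd_eq last_conv_nth)
  have "length us - 2 < length us" "length us - 1 < length us" using l by linarith+
  then have n2: "nthd 0 us (length us - 2) = us ! (length us - 2)"
    and n1: "nthd 0 us (length us - 1) = us ! (length us - 1)" by (simp_all add: nthd_eq)
  have Q: "(\<lambda>n. n > last us \<and> card {(i, j). i < j \<and> j < length us \<and> us ! i + us ! j = n} = 1) =
      (\<lambda>n. Suc (last us) \<le> n \<and> ucnt us n = 1)" by (auto simp: ucnt_card)
  have "unextc us = (LEAST n. Suc (last us) \<le> n \<and> ucnt us n = 1)"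
    unfolding unextc_def lst
  proof (rule filter_upt_least)
    show "Suc (last us) \<le> unext us" using unext_props(1)[OF s l pos] by simp
    show "unext us < nthd 0 us (length us - 2) + last us + 1"
      using unext_props(3)[OF s l pos] n2 n1 lst by simp
    show "ucnt us (unext us) = 1" using unext_props(2)[OF s l pos] by (simp add: ucnt_card)
  qed
  also have "\<dots> = unext us" unfolding unext_def Q ..
  finally show ?thesis .
qed

definition ustep :: "nat list \<Rightarrow> nat list" where "ustep us = us @ [unextc us]"
definition ulist :: "nat \<Rightarrow> nat \<Rightarrow> nat \<Rightarrow> nat list" where "ulist a b k = (ustep ^^ k) [a, b]"

lemma ulist_eq: assumes "0 < a" "a < b" shows "ulist a b k = ulam_prefix a b (Suc (Suc k))"
proof (induction k)
  case 0 then show ?case by (simp add: ulist_def)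
next
  case (Suc k)
  have st: "sorted_wrt (<) (ulam_prefix a b (Suc (Suc k))) \<and> (\<forall>x\<in>set (ulam_prefix a b (Suc (Suc k))). 0 < x)"
    by (rule up_sorted[OF assms])
  have "ulist a b (Suc k) = ustep (ulist a b k)" by (simp add: ulist_def)
  also have "\<dots> = ulam_prefix a b (Suc (Suc k)) @ [unext (ulam_prefix a b (Suc (Suc k)))]"
    using Suc st unextc_eq[of "ulam_prefix a b (Suc (Suc k))"] by (simp add: ustep_def)
  also have "\<dots> = ulam_prefix a b (Suc (Suc (Suc k)))" by (rule up_SSS[symmetric])
  finally show ?case .
qed

lemma ulam_ulist: "0 < a \<Longrightarrow> a < b \<Longrightarrow> k < K + 2 \<Longrightarrow> nthd 0 (ulist a b K) k = ulam a b k"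
  by (simp add: ulist_eq nthd_eq up_nth)

lemma cp_upairs[cp_intros]: "cp f \<Longrightarrow> cp (\<lambda>x. upairs (f x))"
  unfolding upairs_def by (intro cp_intros cp_upt0)

lemma cp_ucnt[cp_intros]: "cp f \<Longrightarrow> cp g \<Longrightarrow> cp (\<lambda>x. ucnt (f x) (g x))"
proof -
  assume f: "cp f" and g: "cp g"
  show ?thesis unfolding ucnt_def by (intro cp_intros cp_app1[OF f] cp_app1[OF g])
qed

lemma cp_unextc[cp_intros]: "cp f \<Longrightarrow> cp (\<lambda>x. unextc (f x))"
proof -
  assume f: "cp f"
  show ?thesis unfolding unextc_def by (intro cp_intros cp_app1[OF f])
qed

lemma cp_ustep[cp_intros]: "cp f \<Longrightarrow> cp (\<lambda>x. ustep (f x))"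
  unfolding ustep_def by (intro cp_intros)

lemma cp_ulist[cp_intros]: "cp f \<Longrightarrow> cp g \<Longrightarrow> cp h \<Longrightarrow> cp (\<lambda>x. ulist (f x) (g x) (h x))"
  unfolding ulist_def by (intro cp_intros)

section \<open>Periodic structure\<close>

lemma ulam_le: "0 < a \<Longrightarrow> a < b \<Longrightarrow> i \<le> j \<Longrightarrow> ulam a b i \<le> ulam a b j"
  using ulam_smono strict_mono_less_eq by blast

lemma period_shift:
  assumes ab: "0 < a" "a < b" and pw: "periodic_witness a b N p" and k: "N \<le> k"
  shows "ulam a b (k + p) = ulam a b k + (ulam a b (N + p) - ulam a b N)"
proof -
  define u where "u = ulam a b"
  have gap: "u (Suc j) = u j + ulam_gap a b j" for j
    using ulam_mono[OF ab, of j] unfolding u_def ulam_gap_def by simp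
  have per: "\<And>j. N \<le> j \<Longrightarrow> ulam_gap a b (j + p) = ulam_gap a b j" using pw unfolding periodic_witness_def by blast
  define D where "D j = u (j + p) - u j" for j
  have Dmono: "u j \<le> u (j + p)" for j using ulam_le[OF ab, of j "j + p"] unfolding u_def by simp
  have DS: "D (Suc j) = D j" if "N \<le> j" for j
  proof -
    have "u (Suc j + p) = u (j + p) + ulam_gap a b j" using gap[of "j + p"] per[OF that] by simp
    then show ?thesis unfolding D_def using gap[of j] Dmono[of j] by simp
  qed
  have "D k = D N" using k
  proof (induction k rule: dec_induct)
    case (step n) then show ?case using DS by simp
  qed simp
  then show ?thesis unfolding D_def u_def using Dmono[of k] by (simp add: u_def)
qed

lemma period_shift_mult:
  assumes ab: "0 < a" "a < b" and pw: "periodic_witness a b N p" and k: "N \<le> k"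
  shows "ulam a b (k + m * p) = ulam a b k + m * (ulam a b (N + p) - ulam a b N)"
proof (induction m)
  case (Suc m)
  have "ulam a b (k + Suc m * p) = ulam a b ((k + m * p) + p)" by (simp add: algebra_simps)
  also have "\<dots> = ulam a b (k + m * p) + (ulam a b (N + p) - ulam a b N)"
    by (rule period_shift[OF ab pw]) (use k in simp)
  finally show ?case using Suc by simp
qed simp

lemma G_pos:
  assumes ab: "0 < a" "a < b" and pw: "periodic_witness a b N p"
  shows "ulam a b N < ulam a b (N + p)"
  using ulam_smono[OF ab] pw unfolding periodic_witness_def strict_mono_def by simp

lemma U_char:
  assumes ab: "0 < a" "a < b" and pw: "periodic_witness a b N p"
  defines "G \<equiv> ulam a b (N + p) - ulam a b N"
  shows "n \<in> ulam_set a b \<longleftrightarrow> (\<exists>k<N. n = ulam a b k) \<or>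
      (\<exists>k\<in>{N..<N + p}. ulam a b k \<le> n \<and> G dvd n - ulam a b k)"
proof
  have p: "1 \<le> p" using pw unfolding periodic_witness_def by simp
  assume "n \<in> ulam_set a b"
  then obtain K where K: "n = ulam a b K" unfolding ulam_set_def by blast
  show "(\<exists>k<N. n = ulam a b k) \<or> (\<exists>k\<in>{N..<N + p}. ulam a b k \<le> n \<and> G dvd n - ulam a b k)"
  proof (cases "K < N")
    case True then show ?thesis using K by blast
  next
    case False
    define r where "r = (K - N) mod p"
    define m where "m = (K - N) div p"
    have Kr: "K = (N + r) + m * p" using False unfolding r_def m_def by simp
    have rp: "r < p" using p unfolding r_def by simp
    have "n = ulam a b (N + r) + m * G" unfolding K Kr G_def by (rule period_shift_mult[OF ab pw]) simp
    then have "ulam a b (N + r) \<le> n \<and> G dvd n - ulam a b (N + r)" by simp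
    then show ?thesis using rp by (intro disjI2 bexI[of _ "N + r"]) auto
  qed
next
  assume "(\<exists>k<N. n = ulam a b k) \<or> (\<exists>k\<in>{N..<N + p}. ulam a b k \<le> n \<and> G dvd n - ulam a b k)"
  then show "n \<in> ulam_set a b"
  proof (elim disjE bexE exE conjE)
    fix k assume "n = ulam a b k" then show ?thesis unfolding ulam_set_def by blast
  next
    fix k assume k: "k \<in> {N..<N + p}" "ulam a b k \<le> n" "G dvd n - ulam a b k"
    then obtain m where m: "n - ulam a b k = G * m" by blast
    have "ulam a b (k + m * p) = ulam a b k + m * G" unfolding G_def
      by (rule period_shift_mult[OF ab pw]) (use k in simp)
    then have "n = ulam a b (k + m * p)" using k m by (simp add: mult.commute)
    then show ?thesis unfolding ulam_set_def by blast
  qed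
qed

definition uparams :: "nat \<Rightarrow> nat \<Rightarrow> nat \<Rightarrow> nat \<Rightarrow> uparams" where
  "uparams a b N p = (map (\<lambda>k. int (nthd 0 (ulist a b (N + p)) k)) [0..<N],
     map (\<lambda>k. int (nthd 0 (ulist a b (N + p)) k)) [N..<N + p],
     int (nthd 0 (ulist a b (N + p)) (N + p)) - int (nthd 0 (ulist a b (N + p)) N))"

lemma cp_uparams[cp_intros]: "cp f \<Longrightarrow> cp g \<Longrightarrow> cp h \<Longrightarrow> cp k \<Longrightarrow> cp (\<lambda>x. uparams (f x) (g x) (h x) (k x))"
proof -
  assume f: "cp f" and g: "cp g" and h: "cp h" and k: "cp k"
  show ?thesis unfolding uparams_def
    by (intro cp_intros cp_upt0 cp_app1[OF f] cp_app1[OF g] cp_app1[OF h] cp_app1[OF k])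
qed

lemma uparams_urep:
  assumes ab: "0 < a" "a < b" and pw: "periodic_witness a b N p"
  shows "urep (uparams a b N p) (ulam_set a b)"
proof -
  define u where "u = ulam a b"
  define G where "G = u (N + p) - u N"
  have Gp: "0 < G" using G_pos[OF ab pw] unfolding G_def u_def by simp
  have nth: "nthd 0 (ulist a b (N + p)) k = u k" if "k \<le> N + p" for k
    using ulam_ulist[OF ab, of k "N + p"] that unfolding u_def by simp
  have P: "uparams a b N p = (map (\<lambda>k. int (u k)) [0..<N], map (\<lambda>k. int (u k)) [N..<N + p], int G)"
  proof -
    have 1: "map (\<lambda>k. int (nthd 0 (ulist a b (N + p)) k)) [0..<N] = map (\<lambda>k. int (u k)) [0..<N]"
      by (rule map_cong) (auto simp: nth)
    have 2: "map (\<lambda>k. int (nthd 0 (ulist a b (N + p)) k)) [N..<N + p] = map (\<lambda>k. int (u k)) [N..<N + p]"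
      by (rule map_cong) (auto simp: nth)
    have 3: "int (nthd 0 (ulist a b (N + p)) (N + p)) - int (nthd 0 (ulist a b (N + p)) N) = int G"
      using nth[of "N + p"] nth[of N] G_pos[OF ab pw] unfolding G_def u_def by (simp add: of_nat_diff)
    show ?thesis unfolding uparams_def 1 2 3 ..
  qed
  have aux: "(m \<le> n \<and> G dvd n - m) = (int m \<le> int n \<and> max 1 \<bar>int G\<bar> dvd int n - int m)" for m n
  proof -
    have mx: "max 1 \<bar>int G\<bar> = int G" using Gp by simp
    show ?thesis
    proof (cases "m \<le> n")
      case True
      then have "int n - int m = int (n - m)" by (simp add: of_nat_diff)
      then show ?thesis using True by (simp only: mx int_dvd_int_iff) simp
    next
      case False then show ?thesis by simp
    qed
  qed
  show ?thesis unfolding urep_def P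
  proof (intro allI)
    fix n
    have "n \<in> ulam_set a b \<longleftrightarrow> (\<exists>k<N. n = u k) \<or> (\<exists>k\<in>{N..<N + p}. u k \<le> n \<and> G dvd n - u k)"
      using U_char[OF ab pw] unfolding u_def G_def by blast
    also have "\<dots> \<longleftrightarrow> (\<exists>x\<in>set (map (\<lambda>k. int (u k)) [0..<N]). int n = x) \<or>
        (\<exists>x\<in>set (map (\<lambda>k. int (u k)) [N..<N + p]). x \<le> int n \<and> max 1 \<bar>int G\<bar> dvd int n - x)"
      by (auto simp: aux image_iff)
    finally show "n \<in> ulam_set a b \<longleftrightarrow> (\<exists>x\<in>set (fst (map (\<lambda>k. int (u k)) [0..<N], map (\<lambda>k. int (u k)) [N..<N + p], int G)). int n = x) \<or>
        (\<exists>x\<in>set (fst (snd (map (\<lambda>k. int (u k)) [0..<N], map (\<lambda>k. int (u k)) [N..<N + p], int G))).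
           x \<le> int n \<and> max 1 \<bar>snd (snd (map (\<lambda>k. int (u k)) [0..<N], map (\<lambda>k. int (u k)) [N..<N + p], int G))\<bar> dvd int n - x)"
      by simp
  qed
qed


lemma real_div_lower: "0 < (G::nat) \<Longrightarrow> real x / real G - 1 \<le> real (x div G)"
proof -
  assume G: "0 < G"
  have "x = G * (x div G) + x mod G" by simp
  then have "real x = real G * real (x div G) + real (x mod G)" by (metis of_nat_add of_nat_mult)
  moreover have "real (x mod G) < real G" using G by simp
  ultimately have "real x < real G * (real (x div G) + 1)" by (simp add: algebra_simps)
  then show ?thesis using G by (simp add: field_simps)
qed

lemma real_div_upper: "0 < (G::nat) \<Longrightarrow> real (x div G) \<le> real x / real G"
proof -
  assume G: "0 < G"
  have "G * (x div G) \<le> x" by simp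
  then have "real G * real (x div G) \<le> real x" by (metis of_nat_le_iff of_nat_mult)
  then show ?thesis using G by (simp add: field_simps)
qed

lemma density_main:
  assumes ab: "0 < a" "a < b" and pw: "periodic_witness a b N p"
  defines "G \<equiv> ulam a b (N + p) - ulam a b N"
  shows "(\<lambda>n. real (card (ulam_set a b \<inter> {0..n})) / real n) \<longlonglongrightarrow> real p / real G"
proof -
  define u where "u = ulam a b"
  define A where "A = u N"
  have sm: "strict_mono u" using ulam_smono[OF ab] unfolding u_def .
  have p1: "1 \<le> p" using pw unfolding periodic_witness_def by simp
  have Gp: "0 < G" using G_pos[OF ab pw] unfolding G_def by simp
  have shift: "u (k + m * p) = u k + m * G" if "N \<le> k" for k m
    using period_shift_mult[OF ab pw that] unfolding u_def G_def .
  have r_bounds: "A \<le> u (N + r) \<and> u (N + r) < A + G" if "r < p" for r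
  proof -
    have "u N \<le> u (N + r)" using sm by (simp add: strict_mono_less_eq)
    moreover have "u (N + r) < u (N + p)" using sm that by (simp add: strict_mono_less)
    moreover have "u N < u (N + p)" using sm p1 by (simp add: strict_mono_less)
    ultimately show ?thesis unfolding A_def G_def u_def by simp
  qed
  have decomp: "u (N + j) = u (N + j mod p) + (j div p) * G" for j
  proof -
    have "N + j = (N + j mod p) + (j div p) * p" by simp
    then show ?thesis using shift[of "N + j mod p" "j div p"] by (simp add: add.commute)
  qed
  have jmod: "j mod p < p" for j using p1 by simp
  define c where "c n = card {k. u k \<le> n}" for n
  have fin: "finite {k. u k \<le> n}" for n
  proof -
    have "{k. u k \<le> n} \<subseteq> {..n}" using strict_mono_imp_increasing[OF sm] by (auto intro: le_trans)
    then show ?thesis by (rule finite_subset) simp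
  qed
  have card_eq: "card (ulam_set a b \<inter> {0..n}) = c n" for n
  proof -
    have "ulam_set a b \<inter> {0..n} = u ` {k. u k \<le> n}" unfolding ulam_set_def u_def by auto
    moreover have "inj_on u {k. u k \<le> n}" by (rule strict_mono_imp_inj_on[OF sm])
    ultimately show ?thesis unfolding c_def by (simp add: card_image)
  qed
  have upper: "c n \<le> N + p * (n div G + 1)" for n
  proof -
    have "{k. u k \<le> n} \<subseteq> {..<N + p * (n div G + 1)}"
    proof
      fix k assume k: "k \<in> {k. u k \<le> n}"
      show "k \<in> {..<N + p * (n div G + 1)}"
      proof (cases "k < N")
        case True then show ?thesis by simp
      next
        case False
        define j where "j = k - N"
        have kj: "k = N + j" using False unfolding j_def by simp
        have "A + (j div p) * G \<le> u k" using decomp[of j] r_bounds[OF jmod[of j]] kj by simp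
        then have "(j div p) * G \<le> n" using k by simp
        then have "j div p \<le> n div G" using Gp by (simp add: less_eq_div_iff_mult_less_eq)
        moreover have "j < (j div p + 1) * p" using p1
          by (metis add.commute div_mult_mod_eq jmod add_less_cancel_left distrib_right mult_1)
        moreover have "(j div p + 1) * p \<le> (n div G + 1) * p"
          by (rule mult_le_mono1) (use \<open>j div p \<le> n div G\<close> in simp)
        ultimately have "j < (n div G + 1) * p" by linarith
        then show ?thesis using kj by (simp add: mult.commute)
      qed
    qed
    then have "c n \<le> card {..<N + p * (n div G + 1)}" unfolding c_def by (rule card_mono[rotated]) simp
    then show ?thesis by simp
  qed
  have lower: "p * ((n - A) div G) \<le> c n" for n
  proof -
    have "(\<lambda>j. N + j) ` {..<p * ((n - A) div G)} \<subseteq> {k. u k \<le> n}"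
    proof
      fix k assume "k \<in> (\<lambda>j. N + j) ` {..<p * ((n - A) div G)}"
      then obtain j where j: "j < p * ((n - A) div G)" "k = N + j" by blast
      have "j div p < (n - A) div G" using j(1) p1
        by (metis div_less_iff_less_mult mult.commute not_one_le_zero neq0_conv)
      then have "j div p + 1 \<le> (n - A) div G" by simp
      then have "(j div p + 1) * G \<le> n - A" using less_eq_div_iff_mult_less_eq[OF Gp] by blast
      moreover have "u k < A + G + (j div p) * G" using decomp[of j] r_bounds[OF jmod[of j]] j(2) by simp
      ultimately show "k \<in> {k. u k \<le> n}" using Gp by (simp add: algebra_simps)
    qed
    moreover have "card ((\<lambda>j. N + j) ` {..<p * ((n - A) div G)}) = p * ((n - A) div G)"
      by (simp add: card_image)
    ultimately show ?thesis unfolding c_def by (metis card_mono fin)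
  qed
  define C1 where "C1 = real p * (real A / real G + 1)"
  define C2 where "C2 = real N + real p"
  have ev1: "\<forall>\<^sub>F n in sequentially. real p / real G - C1 / real n \<le> real (c n) / real n"
  proof (rule eventually_sequentiallyI[of 1])
    fix n :: nat assume n: "1 \<le> n"
    have "real (n - A) / real G - 1 \<le> real ((n - A) div G)" by (rule real_div_lower[OF Gp])
    moreover have "(real n - real A) / real G \<le> real (n - A) / real G" using Gp
      by (intro divide_right_mono) auto
    ultimately have "(real n - real A) / real G - 1 \<le> real ((n - A) div G)" by linarith
    then have "real p * ((real n - real A) / real G - 1) \<le> real p * real ((n - A) div G)"
      by (intro mult_left_mono) auto
    also have "\<dots> \<le> real (c n)" using lower[of n] by (metis of_nat_le_iff of_nat_mult)
    finally have X: "real p * ((real n - real A) / real G - 1) \<le> real (c n)" .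
    have eq: "real p * ((real n - real A) / real G - 1) = real p * real n / real G - C1"
      unfolding C1_def using Gp by (simp add: field_simps)
    from X have Y: "real p * real n / real G - C1 \<le> real (c n)" unfolding eq .
    have "(real p * real n / real G - C1) / real n \<le> real (c n) / real n"
      by (rule divide_right_mono[OF Y]) simp
    moreover have "(real p * real n / real G - C1) / real n = real p / real G - C1 / real n"
      using n by (simp add: field_simps)
    ultimately show "real p / real G - C1 / real n \<le> real (c n) / real n" by simp
  qed
  have ev2: "\<forall>\<^sub>F n in sequentially. real (c n) / real n \<le> real p / real G + C2 / real n"
  proof (rule eventually_sequentiallyI[of 1])
    fix n :: nat assume n: "1 \<le> n"
    have "real (c n) \<le> real N + real p * (real (n div G) + 1)" using upper[of n]
      by (metis of_nat_add of_nat_le_iff of_nat_mult of_nat_1)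
    also have "\<dots> \<le> real N + real p * (real n / real G + 1)"
      using real_div_upper[OF Gp, of n] by (intro add_left_mono mult_left_mono) auto
    finally have X: "real (c n) \<le> real N + real p * (real n / real G + 1)" .
    have eq: "real N + real p * (real n / real G + 1) = real p * real n / real G + C2"
      unfolding C2_def using Gp by (simp add: field_simps)
    from X have Y: "real (c n) \<le> real p * real n / real G + C2" unfolding eq .
    have "real (c n) / real n \<le> (real p * real n / real G + C2) / real n"
      by (rule divide_right_mono[OF Y]) simp
    moreover have "(real p * real n / real G + C2) / real n = real p / real G + C2 / real n"
      using n by (simp add: field_simps)
    ultimately show "real (c n) / real n \<le> real p / real G + C2 / real n" by simp
  qed
  have l1: "(\<lambda>n. real p / real G - C1 / real n) \<longlonglongrightarrow> real p / real G"
    using tendsto_diff[OF tendsto_const lim_const_over_n[of C1]] by simp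
  have l2: "(\<lambda>n. real p / real G + C2 / real n) \<longlonglongrightarrow> real p / real G"
    using tendsto_add[OF tendsto_const lim_const_over_n[of C2]] by simp
  have "(\<lambda>n. real (c n) / real n) \<longlonglongrightarrow> real p / real G"
    by (rule real_tendsto_sandwich[OF ev1 ev2 l1 l2])
  then show ?thesis by (simp add: card_eq)
qed


lemma cp_raw: "cp (F :: 'a::encode \<Rightarrow> nat) \<Longrightarrow> \<exists>r. \<forall>x. eval r [enc x] (F x)"
  unfolding cp_def rc_def by (metis enc_nat)

lemma cp_prod_encode[cp_intros]: "cp f \<Longrightarrow> cp g \<Longrightarrow> cp (\<lambda>x. prod_encode (f x, g x))"
proof -
  assume f: "cp f" and g: "cp g"
  have "cp (\<lambda>x. enc (f x, g x))" by (intro cp_intros f g)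
  then show ?thesis by (rule cp_cong) simp
qed

lemma ev_cn4: "eval g1 xs y1 \<Longrightarrow> eval g2 xs y2 \<Longrightarrow> eval g3 xs y3 \<Longrightarrow> eval g4 xs y4 \<Longrightarrow>
   eval f [y1, y2, y3, y4] z \<Longrightarrow> eval (Cn f [g1, g2, g3, g4]) xs z"
  by (rule eval_Cn[of _ _ "[y1, y2, y3, y4]"]) auto

definition decf :: "nat \<times> nat \<times> nat \<times> nat \<times> nat \<times> nat \<Rightarrow> nat" where
  "decf q = (if dvalL (fmN (uparams (fst q) (fst (snd q)) (fst (snd (snd (snd (snd q))))) (snd (snd (snd (snd (snd q))))))
                   (fst (snd (snd q))))
                (list_decode (fst (snd (snd (snd q))))) then 1 else 0)"

lemma cp_decf: "cp decf"
  unfolding decf_def by (intro cp_intros)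

definition densf :: "nat \<times> nat \<times> nat \<times> nat \<Rightarrow> nat" where
  "densf q = prod_encode (int_encode (int (snd (snd (snd q)))),
     nthd 0 (ulist (fst q) (fst (snd q)) (fst (snd (snd q)) + snd (snd (snd q)))) (fst (snd (snd q)) + snd (snd (snd q))) -
     nthd 0 (ulist (fst q) (fst (snd q)) (fst (snd (snd q)) + snd (snd (snd q)))) (fst (snd (snd q))))"

lemma cp_densf: "cp densf"
  unfolding densf_def by (intro cp_intros)

theorem mainTheorem19:
  fixes P :: "(nat \<times> nat) set" and wN wp :: recf
  assumes pairs: "\<And>a b. (a, b) \<in> P \<Longrightarrow> 0 < a \<and> a < b \<and> coprime a b"
    and witnesses: "\<And>a b. (a, b) \<in> P \<Longrightarrow>
          \<exists>N p. eval wN [a, b] N \<and> eval wp [a, b] p \<and> periodic_witness a b N p"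
  shows
    "(\<exists>D. \<forall>a b. (a, b) \<in> P \<longrightarrow>
        (\<exists>num den. den > 0 \<and> eval D [a, b] (prod_encode (int_encode num, den)) \<and>
           (\<lambda>n. real (card (ulam_set a b \<inter> {0..n})) / real n)
             \<longlonglongrightarrow> real_of_int num / real den))
   \<and> (\<exists>T. \<forall>a b \<phi>. (a, b) \<in> P \<and> fvars \<phi> = {} \<longrightarrow>
        eval T [a, b, fm_code \<phi>] (if sat (ulam_set a b) (\<lambda>_. 0) \<phi> then 1 else 0))
   \<and> (\<exists>M. \<forall>a b \<phi> xs. (a, b) \<in> P \<and> fvars \<phi> \<subseteq> {..<length xs} \<longrightarrow>
        eval M [a, b, fm_code \<phi>, list_encode xs]
          (if sat (ulam_set a b) (tuple_env xs) \<phi> then 1 else 0))"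
proof -
  obtain rpe where rpe: "\<And>m n. eval rpe [m, n] (prod_encode (m, n))" using rc2_pe unfolding rc2_def by blast
  have evpe: "eval X xs x \<Longrightarrow> eval Y xs y \<Longrightarrow> eval (Cn rpe [X, Y]) xs (prod_encode (x, y))" for X Y xs x y
    by (rule ev_cn2[OF _ _ rpe])
  have evw: "eval (Cn w [Proj 0, Proj 1]) (a # b # zs) y" if "eval w [a, b] y" for w a b zs y
    by (rule ev_cn2[OF _ _ that]) (auto intro: ev_proj)
  have p0: "eval (Proj 0) (a # zs) a" for a zs by (rule ev_proj) auto
  have p1: "eval (Proj 1) (a # b # zs) b" for a b zs by (rule ev_proj) auto
  have p2: "eval (Proj 2) (a # b # c # zs) c" for a b c zs by (rule ev_proj) auto
  have p3: "eval (Proj 3) (a # b # c # d # zs) d" for a b c d zs by (rule ev_proj) auto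
  obtain rd where rd: "\<And>q. eval rd [enc q] (decf q)" using cp_raw[OF cp_decf] by blast
  define M where "M = Cn rd [Cn rpe [Proj 0, Cn rpe [Proj 1, Cn rpe [Proj 2, Cn rpe [Proj 3,
      Cn rpe [Cn wN [Proj 0, Proj 1], Cn wp [Proj 0, Proj 1]]]]]]]"
  have Mok: "eval M [a, b, c, l] (decf (a, b, c, l, N, p))"
    if "eval wN [a, b] N" "eval wp [a, b] p" for a b c l N p
  proof -
    have "eval (Cn rpe [Proj 0, Cn rpe [Proj 1, Cn rpe [Proj 2, Cn rpe [Proj 3,
      Cn rpe [Cn wN [Proj 0, Proj 1], Cn wp [Proj 0, Proj 1]]]]]]) [a, b, c, l] (enc (a, b, c, l, N, p))"
      unfolding enc_pair enc_nat by (intro evpe p0 p1 p2 p3 evw that)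
    then show ?thesis unfolding M_def by (rule ev_cn1[OF _ rd])
  qed
  have part3: "\<forall>a b \<phi> xs. (a, b) \<in> P \<and> fvars \<phi> \<subseteq> {..<length xs} \<longrightarrow>
        eval M [a, b, fm_code \<phi>, list_encode xs] (if sat (ulam_set a b) (tuple_env xs) \<phi> then 1 else 0)"
  proof (intro allI impI, elim conjE)
    fix a b \<phi> xs assume ab: "(a, b) \<in> P"
    obtain N p where w: "eval wN [a, b] N" "eval wp [a, b] p" "periodic_witness a b N p"
      using witnesses[OF ab] by blast
    have a: "0 < a" "a < b" using pairs[OF ab] by auto
    have "decf (a, b, fm_code \<phi>, list_encode xs, N, p) = (if sat (ulam_set a b) (tuple_env xs) \<phi> then 1 else 0)"
      using decide_correct[OF uparams_urep[OF a w(3)], of \<phi> xs] by (simp add: decf_def)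
    then show "eval M [a, b, fm_code \<phi>, list_encode xs] (if sat (ulam_set a b) (tuple_env xs) \<phi> then 1 else 0)"
      using Mok[OF w(1,2)] by metis
  qed
  define T where "T = Cn M [Proj 0, Proj 1, Proj 2, Z]"
  have part2: "\<forall>a b \<phi>. (a, b) \<in> P \<and> fvars \<phi> = {} \<longrightarrow>
        eval T [a, b, fm_code \<phi>] (if sat (ulam_set a b) (\<lambda>_. 0) \<phi> then 1 else 0)"
  proof (intro allI impI, elim conjE)
    fix a b \<phi> assume ab: "(a, b) \<in> P" and fv: "fvars \<phi> = {}"
    have te: "tuple_env [] = (\<lambda>_. 0)" by (auto simp: tuple_env_def)
    have "eval M [a, b, fm_code \<phi>, list_encode []] (if sat (ulam_set a b) (tuple_env []) \<phi> then 1 else 0)"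
      using part3 ab fv by blast
    then have "eval M [a, b, fm_code \<phi>, 0] (if sat (ulam_set a b) (\<lambda>_. 0) \<phi> then 1 else 0)"
      by (simp add: te)
    then show "eval T [a, b, fm_code \<phi>] (if sat (ulam_set a b) (\<lambda>_. 0) \<phi> then 1 else 0)"
      unfolding T_def by (rule ev_cn4[OF p0 p1 p2 eval_Z])
  qed
  obtain rs where rs: "\<And>q. eval rs [enc q] (densf q)" using cp_raw[OF cp_densf] by blast
  define D where "D = Cn rs [Cn rpe [Proj 0, Cn rpe [Proj 1, Cn rpe [Cn wN [Proj 0, Proj 1], Cn wp [Proj 0, Proj 1]]]]]"
  have Dok: "eval D [a, b] (densf (a, b, N, p))"
    if "eval wN [a, b] N" "eval wp [a, b] p" for a b N p
  proof -
    have "eval (Cn rpe [Proj 0, Cn rpe [Proj 1, Cn rpe [Cn wN [Proj 0, Proj 1], Cn wp [Proj 0, Proj 1]]]])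
        [a, b] (enc (a, b, N, p))"
      unfolding enc_pair enc_nat by (intro evpe p0 p1 evw[where zs = "[]"] that)
    then show ?thesis unfolding D_def by (rule ev_cn1[OF _ rs])
  qed
  have part1: "\<forall>a b. (a, b) \<in> P \<longrightarrow>
        (\<exists>num den. den > 0 \<and> eval D [a, b] (prod_encode (int_encode num, den)) \<and>
           (\<lambda>n. real (card (ulam_set a b \<inter> {0..n})) / real n) \<longlonglongrightarrow> real_of_int num / real den)"
  proof (intro allI impI)
    fix a b assume ab: "(a, b) \<in> P"
    obtain N p where w: "eval wN [a, b] N" "eval wp [a, b] p" "periodic_witness a b N p"
      using witnesses[OF ab] by blast
    have a: "0 < a" "a < b" using pairs[OF ab] by auto
    define G where "G = ulam a b (N + p) - ulam a b N"
    have Gp: "0 < G" using G_pos[OF a w(3)] unfolding G_def by simp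
    have dn: "densf (a, b, N, p) = prod_encode (int_encode (int p), G)"
      using ulam_ulist[OF a, of "N + p" "N + p"] ulam_ulist[OF a, of N "N + p"]
      by (simp add: densf_def G_def)
    have lim: "(\<lambda>n. real (card (ulam_set a b \<inter> {0..n})) / real n) \<longlonglongrightarrow> real_of_int (int p) / real G"
      using density_main[OF a w(3)] unfolding G_def by simp
    show "\<exists>num den. den > 0 \<and> eval D [a, b] (prod_encode (int_encode num, den)) \<and>
           (\<lambda>n. real (card (ulam_set a b \<inter> {0..n})) / real n) \<longlonglongrightarrow> real_of_int num / real den"
      using Gp Dok[OF w(1,2)] lim dn by metis
  qed
  show ?thesis using part1 part2 part3 by blast
qed


end
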